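(* Let $\Gamma$ be a finite connected tetravalent $G$-half-arc-transitive graph, $G\leq\mathrm{Aut}(\Gamma)$. Then $G$ has a normal subgroup $N$ such that $\Gamma_N$ is a tetravalent basic $G/N$-half-arc-transitive graph.
   Context: $\Gamma$ is $G$-half-arc-transitive if $G$ is transitive on vertices and edges but not on arcs. For $N\trianglelefteq G$, the normal quotient $\Gamma_N$ has as vertices the $N$-orbits on $V(\Gamma)$, two distinct orbits adjacent iff some edge of $\Gamma$ joins them; $G/N$ acts on it when $N$ is the kernel of the action. A connected tetravalent $X$-half-arc-transitive graph $\Sigma$ is basic (for $X$) if $\Sigma_M$ has valency at most 2 for every non-trivial normal subgroup $M$ of $X$. *)

theory Defs
  imports "HOL-Algebra.Algebra"
begin

text \<open>Permutation groups on V
are subgroups of the library group BijGroup V of (extensional) bijections of V.\<close>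

definition simple_graph :: "'a set \<Rightarrow> ('a \<Rightarrow> 'a \<Rightarrow> bool) \<Rightarrow> bool" where
  "simple_graph V E \<longleftrightarrow> (\<forall>x y. E x y \<longrightarrow> x \<in> V \<and> y \<in> V) \<and>
     (\<forall>x y. E x y \<longrightarrow> E y x) \<and> (\<forall>x. \<not> E x x)"

definition connected_graph :: "'a set \<Rightarrow> ('a \<Rightarrow> 'a \<Rightarrow> bool) \<Rightarrow> bool" where
  "connected_graph V E \<longleftrightarrow> V \<noteq> {} \<and>
     (\<forall>u\<in>V. \<forall>v\<in>V. (\<lambda>x y. E x y \<and> x \<in> V \<and> y \<in> V)\<^sup>*\<^sup>* u v)"

definition tetravalent :: "'a set \<Rightarrow> ('a \<Rightarrow> 'a \<Rightarrow> bool) \<Rightarrow> bool" where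
  "tetravalent V E \<longleftrightarrow> (\<forall>v\<in>V. card {u\<in>V. E v u} = 4)"

definition valency_le :: "nat \<Rightarrow> 'a set \<Rightarrow> ('a \<Rightarrow> 'a \<Rightarrow> bool) \<Rightarrow> bool" where
  "valency_le k V E \<longleftrightarrow> (\<forall>v\<in>V. finite {u\<in>V. E v u} \<and> card {u\<in>V. E v u} \<le> k)"

abbreviation perm_grp :: "'a set \<Rightarrow> ('a \<Rightarrow> 'a) set \<Rightarrow> ('a \<Rightarrow> 'a) monoid" where
  "perm_grp V G \<equiv> (BijGroup V)\<lparr>carrier := G\<rparr>"

definition is_automorphism :: "'a set \<Rightarrow> ('a \<Rightarrow> 'a \<Rightarrow> bool) \<Rightarrow> ('a \<Rightarrow> 'a) \<Rightarrow> bool" where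
  "is_automorphism V E g \<longleftrightarrow> g \<in> Bij V \<and> (\<forall>x\<in>V. \<forall>y\<in>V. E x y \<longleftrightarrow> E (g x) (g y))"

definition subgroup_Aut :: "('a \<Rightarrow> 'a) set \<Rightarrow> 'a set \<Rightarrow> ('a \<Rightarrow> 'a \<Rightarrow> bool) \<Rightarrow> bool" where
  "subgroup_Aut G V E \<longleftrightarrow> subgroup G (BijGroup V) \<and> (\<forall>g\<in>G. is_automorphism V E g)"

definition vertex_transitive :: "('a \<Rightarrow> 'a) set \<Rightarrow> 'a set \<Rightarrow> bool" where
  "vertex_transitive G V \<longleftrightarrow> (\<forall>u\<in>V. \<forall>v\<in>V. \<exists>g\<in>G. g u = v)"

definition edge_transitive :: "('a \<Rightarrow> 'a) set \<Rightarrow> 'a set \<Rightarrow> ('a \<Rightarrow> 'a \<Rightarrow> bool) \<Rightarrow> bool" where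
  "edge_transitive G V E \<longleftrightarrow> (\<forall>u v x y. E u v \<longrightarrow> E x y \<longrightarrow> (\<exists>g\<in>G. {g u, g v} = {x, y}))"

definition arc_transitive :: "('a \<Rightarrow> 'a) set \<Rightarrow> 'a set \<Rightarrow> ('a \<Rightarrow> 'a \<Rightarrow> bool) \<Rightarrow> bool" where
  "arc_transitive G V E \<longleftrightarrow> (\<forall>u v x y. E u v \<longrightarrow> E x y \<longrightarrow> (\<exists>g\<in>G. g u = x \<and> g v = y))"

definition half_arc_transitive :: "('a \<Rightarrow> 'a) set \<Rightarrow> 'a set \<Rightarrow> ('a \<Rightarrow> 'a \<Rightarrow> bool) \<Rightarrow> bool" where
  "half_arc_transitive G V E \<longleftrightarrow> subgroup_Aut G V E \<and> vertex_transitive G V \<and>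
     edge_transitive G V E \<and> \<not> arc_transitive G V E"

definition orbit :: "('a \<Rightarrow> 'a) set \<Rightarrow> 'a \<Rightarrow> 'a set" where
  "orbit N v = {g v | g. g \<in> N}"

definition quot_V :: "('a \<Rightarrow> 'a) set \<Rightarrow> 'a set \<Rightarrow> 'a set set" where
  "quot_V N V = orbit N ` V"

definition quot_E :: "('a \<Rightarrow> 'a) set \<Rightarrow> 'a set \<Rightarrow> ('a \<Rightarrow> 'a \<Rightarrow> bool) \<Rightarrow> 'a set \<Rightarrow> 'a set \<Rightarrow> bool" where
  "quot_E N V E A B \<longleftrightarrow> A \<in> quot_V N V \<and> B \<in> quot_V N V \<and> A \<noteq> B \<and>
     (\<exists>x\<in>A. \<exists>y\<in>B. E x y)"

text \<open>The action of g on the N-orbits, and the group induced by G on Gamma_N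
(isomorphic to G/N exactly when N is the kernel of this action).\<close>
definition induced_perm :: "('a \<Rightarrow> 'a) set \<Rightarrow> 'a set \<Rightarrow> ('a \<Rightarrow> 'a) \<Rightarrow> 'a set \<Rightarrow> 'a set" where
  "induced_perm N V g = (\<lambda>A \<in> quot_V N V. g ` A)"

definition induced_group :: "('a \<Rightarrow> 'a) set \<Rightarrow> ('a \<Rightarrow> 'a) set \<Rightarrow> 'a set \<Rightarrow> ('a set \<Rightarrow> 'a set) set" where
  "induced_group G N V = induced_perm N V ` G"

definition action_kernel :: "('a \<Rightarrow> 'a) set \<Rightarrow> ('a \<Rightarrow> 'a) set \<Rightarrow> 'a set \<Rightarrow> ('a \<Rightarrow> 'a) set" where
  "action_kernel G N V = {g \<in> G. induced_perm N V g = (\<lambda>A \<in> quot_V N V. A)}"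

definition basic :: "('a \<Rightarrow> 'a) set \<Rightarrow> 'a set \<Rightarrow> ('a \<Rightarrow> 'a \<Rightarrow> bool) \<Rightarrow> bool" where
  "basic H V E \<longleftrightarrow> connected_graph V E \<and> tetravalent V E \<and> half_arc_transitive H V E \<and>
     (\<forall>M. normal M (perm_grp V H) \<longrightarrow> M \<noteq> {(\<lambda>x \<in> V. x)} \<longrightarrow>
        valency_le 2 (quot_V M V) (quot_E M V E))"

end

theory Submission
  imports Defs
begin

definition psub :: "'a set \<Rightarrow> ('a \<Rightarrow> 'a) set \<Rightarrow> bool" where
  "psub S N \<longleftrightarrow> N \<subseteq> Bij S \<and> (\<lambda>x\<in>S. x) \<in> N \<and> (\<forall>g\<in>N. \<forall>h\<in>N. compose S g h \<in> N)
     \<and> (\<forall>g\<in>N. restrict (inv_into S g) S \<in> N)"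

definition ginv :: "'a set \<Rightarrow> ('a \<Rightarrow> 'a) \<Rightarrow> ('a \<Rightarrow> 'a)" where
  "ginv S g = restrict (inv_into S g) S"

definition nrm :: "'a set \<Rightarrow> ('a \<Rightarrow> 'a) set \<Rightarrow> ('a \<Rightarrow> 'a) set \<Rightarrow> bool" where
  "nrm S G N \<longleftrightarrow> psub S N \<and> N \<subseteq> G \<and>
     (\<forall>g\<in>G. \<forall>n\<in>N. compose S (compose S g n) (ginv S g) \<in> N)"

lemma Bij_bij: "g \<in> Bij S \<Longrightarrow> bij_betw g S S" by (simp add: Bij_def)
lemma Bij_ext: "g \<in> Bij S \<Longrightarrow> g \<in> extensional S" by (simp add: Bij_def)
lemma Bij_map: "g \<in> Bij S \<Longrightarrow> x \<in> S \<Longrightarrow> g x \<in> S"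
  by (meson Bij_bij bij_betwE)
lemma Bij_inj: "g \<in> Bij S \<Longrightarrow> x \<in> S \<Longrightarrow> y \<in> S \<Longrightarrow> g x = g y \<Longrightarrow> x = y"
  by (meson Bij_bij bij_betw_def inj_onD)
lemma Bij_img: "g \<in> Bij S \<Longrightarrow> g ` S = S"
  by (simp add: Bij_bij bij_betw_imp_surj_on)
lemma ginv_map: "g \<in> Bij S \<Longrightarrow> x \<in> S \<Longrightarrow> ginv S g x \<in> S"
  by (simp add: ginv_def Bij_inv_into_mem)
lemma ginv_right: "g \<in> Bij S \<Longrightarrow> x \<in> S \<Longrightarrow> g (ginv S g x) = x"
  by (simp add: ginv_def Bij_img f_inv_into_f)
lemma ginv_left: "g \<in> Bij S \<Longrightarrow> x \<in> S \<Longrightarrow> ginv S g (g x) = x"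
  by (simp add: ginv_def Bij_map) (meson Bij_bij bij_betw_inv_into_left)
lemma ginv_Bij: "g \<in> Bij S \<Longrightarrow> ginv S g \<in> Bij S"
  by (simp add: ginv_def restrict_inv_into_Bij)
lemma Bij_eqI: "f \<in> Bij S \<Longrightarrow> g \<in> Bij S \<Longrightarrow> (\<And>x. x \<in> S \<Longrightarrow> f x = g x) \<Longrightarrow> f = g"
  by (meson Bij_ext extensionalityI)

lemma psubD:
  assumes "psub S N"
  shows "N \<subseteq> Bij S" "(\<lambda>x\<in>S. x) \<in> N" "g \<in> N \<Longrightarrow> h \<in> N \<Longrightarrow> compose S g h \<in> N"
    "g \<in> N \<Longrightarrow> ginv S g \<in> N"
  using assms by (auto simp: psub_def ginv_def)

lemma psub_Bij: "psub S N \<Longrightarrow> g \<in> N \<Longrightarrow> g \<in> Bij S"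
  using psubD(1) by blast

lemma BijGroup_simps:
  "carrier (BijGroup S) = Bij S"
  "\<one>\<^bsub>BijGroup S\<^esub> = (\<lambda>x\<in>S. x)"
  "f \<in> Bij S \<Longrightarrow> g \<in> Bij S \<Longrightarrow> f \<otimes>\<^bsub>BijGroup S\<^esub> g = compose S f g"
  by (auto simp: BijGroup_def)

lemma BijGroup_inv: "f \<in> Bij S \<Longrightarrow> inv\<^bsub>BijGroup S\<^esub> f = ginv S f"
  by (simp add: inv_BijGroup ginv_def)

lemma perm_grp_simps:
  "carrier (perm_grp S G) = G"
  "\<one>\<^bsub>perm_grp S G\<^esub> = (\<lambda>x\<in>S. x)"
  "f \<in> Bij S \<Longrightarrow> g \<in> Bij S \<Longrightarrow> f \<otimes>\<^bsub>perm_grp S G\<^esub> g = compose S f g"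
  by (auto simp: BijGroup_def)

lemma subgroup_psub: "subgroup N (BijGroup S) \<Longrightarrow> psub S N"
proof -
  assume N: "subgroup N (BijGroup S)"
  have NB: "N \<subseteq> Bij S" using subgroup.subset[OF N] by (simp add: BijGroup_def)
  show ?thesis unfolding psub_def
  proof (intro conjI ballI NB)
    show "(\<lambda>x\<in>S. x) \<in> N" using subgroup.one_closed[OF N] by (simp add: BijGroup_def)
  next
    fix g h assume "g \<in> N" "h \<in> N"
    moreover have "g \<in> Bij S" "h \<in> Bij S" using NB calculation by auto
    ultimately show "compose S g h \<in> N" using subgroup.m_closed[OF N, of g h]
      by (simp add: BijGroup_def)
  next
    fix g assume g: "g \<in> N"
    have gB: "g \<in> Bij S" using g NB by auto
    show "restrict (inv_into S g) S \<in> N" using subgroup.m_inv_closed[OF N g]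
      BijGroup_inv[OF gB] by (simp add: ginv_def)
  qed
qed

lemma psub_subgroup: "psub S N \<Longrightarrow> subgroup N (BijGroup S)"
  apply (rule subgroup.intro)
  using psubD[of S N] psub_Bij[of S N] by (auto simp: BijGroup_simps BijGroup_inv)

lemma sub_perm_grp_psub:
  assumes G: "subgroup G (BijGroup V)" and N: "subgroup N (perm_grp V G)"
  shows "psub V N"
proof -
  have NG: "N \<subseteq> G" using N subgroup.subset by fastforce
  have GB: "G \<subseteq> Bij V" using subgroup.subset[OF G] by (simp add: BijGroup_def)
  interpret BG: group "BijGroup V" by (rule group_BijGroup)
  show ?thesis unfolding psub_def
  proof (intro conjI ballI)
    show "N \<subseteq> Bij V" using NG GB by auto
    show "(\<lambda>x\<in>V. x) \<in> N" using subgroup.one_closed[OF N] by (simp add: BijGroup_def)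
  next
    fix g h assume "g \<in> N" "h \<in> N"
    moreover have "g \<in> Bij V" "h \<in> Bij V" using NG GB calculation by auto
    ultimately show "compose V g h \<in> N" using subgroup.m_closed[OF N, of g h]
      by (simp add: BijGroup_simps)
  next
    fix g assume g: "g \<in> N"
    have "inv\<^bsub>perm_grp V G\<^esub> g \<in> N" using subgroup.m_inv_closed[OF N g] .
    moreover have "inv\<^bsub>perm_grp V G\<^esub> g = inv\<^bsub>BijGroup V\<^esub> g"
      using BG.m_inv_consistent[OF G] g NG by auto
    ultimately show "restrict (inv_into V g) V \<in> N"
      using g NG GB BijGroup_inv[OF subsetD[OF GB]] by (auto simp: ginv_def)
  qed
qed

lemma normal_nrm:
  assumes G: "subgroup G (BijGroup V)" and N: "normal N (perm_grp V G)"
  shows "nrm V G N"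
proof -
  interpret BG: group "BijGroup V" by (rule group_BijGroup)
  have grp: "group (perm_grp V G)" using G by (simp add: subgroup.subgroup_is_group group_BijGroup)
  have Ns: "subgroup N (perm_grp V G)" using N normal_imp_subgroup by blast
  have NG: "N \<subseteq> G" using Ns subgroup.subset by fastforce
  have GB: "G \<subseteq> Bij V" using subgroup.subset[OF G] by (simp add: BijGroup_def)
  have ps: "psub V N" using sub_perm_grp_psub[OF G Ns] .
  have "compose V (compose V g n) (ginv V g) \<in> N" if g: "g \<in> G" and n: "n \<in> N" for g n
  proof -
    have "g \<otimes>\<^bsub>perm_grp V G\<^esub> n \<otimes>\<^bsub>perm_grp V G\<^esub> inv\<^bsub>perm_grp V G\<^esub> g \<in> N"
      using group.normal_invE(2)[OF grp N] g n by simp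
    moreover have "inv\<^bsub>perm_grp V G\<^esub> g = ginv V g"
      using BG.m_inv_consistent[OF G g] g GB BijGroup_inv[OF subsetD[OF GB]] by auto
    moreover have "ginv V g \<in> Bij V" using g GB ginv_Bij by blast
    moreover have "compose V g n \<in> Bij V" using g n GB NG compose_Bij by blast
    moreover have "g \<in> Bij V" "n \<in> Bij V" using NG GB g n by auto
    ultimately show ?thesis by (simp add: BijGroup_simps)
  qed
  then show ?thesis using ps NG by (auto simp: nrm_def)
qed

lemma nrm_normal:
  assumes G: "subgroup G (BijGroup V)" and N: "nrm V G N"
  shows "normal N (perm_grp V G)"
proof -
  interpret BG: group "BijGroup V" by (rule group_BijGroup)
  have grp: "group (perm_grp V G)" using G by (simp add: subgroup.subgroup_is_group group_BijGroup)
  have ps: "psub V N" and NG: "N \<subseteq> G" using N by (auto simp: nrm_def)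
  have GB: "G \<subseteq> Bij V" using subgroup.subset[OF G] by (simp add: BijGroup_def)
  have Ns: "subgroup N (BijGroup V)" using psub_subgroup[OF ps] .
  have sub: "subgroup N (perm_grp V G)"
    using BG.subgroup_incl[OF Ns G NG] .
  show ?thesis
  proof (rule group.normal_invI[OF grp sub])
    fix g n assume g: "g \<in> carrier (perm_grp V G)" and n: "n \<in> N"
    have gG: "g \<in> G" using g by simp
    have "inv\<^bsub>perm_grp V G\<^esub> g = ginv V g"
      using BG.m_inv_consistent[OF G gG] gG GB BijGroup_inv[OF subsetD[OF GB]] by auto
    moreover have "ginv V g \<in> Bij V" using gG GB ginv_Bij by blast
    moreover have "compose V g n \<in> Bij V" using gG n GB NG compose_Bij by blast
    moreover have "compose V (compose V g n) (ginv V g) \<in> N" using N gG n by (auto simp: nrm_def)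
    ultimately show "g \<otimes>\<^bsub>perm_grp V G\<^esub> n \<otimes>\<^bsub>perm_grp V G\<^esub> inv\<^bsub>perm_grp V G\<^esub> g \<in> N"
      using gG n GB NG by (simp add: BijGroup_simps subsetD)
  qed
qed


section \<open>Orbits\<close>

lemma orb_mem: "psub S N \<Longrightarrow> v \<in> S \<Longrightarrow> v \<in> orbit N v"
proof -
  assume "psub S N" "v \<in> S"
  then have "(\<lambda>x\<in>S. x) \<in> N" "(\<lambda>x\<in>S. x) v = v" using psubD(2) by auto
  then show ?thesis unfolding orbit_def by (metis (mono_tags, lifting) mem_Collect_eq)
qed

lemma orb_sub: "psub S N \<Longrightarrow> v \<in> S \<Longrightarrow> orbit N v \<subseteq> S"
  unfolding orbit_def using psub_Bij[of S N] Bij_map[of _ S v] by auto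

lemma orbI: "n \<in> N \<Longrightarrow> n v \<in> orbit N v"
  unfolding orbit_def by blast

lemma orbE: "w \<in> orbit N v \<Longrightarrow> (\<And>n. n \<in> N \<Longrightarrow> w = n v \<Longrightarrow> P) \<Longrightarrow> P"
  unfolding orbit_def by blast

lemma orb_same:
  assumes N: "psub S N" and v: "v \<in> S" and w: "w \<in> orbit N v"
  shows "orbit N w = orbit N v"
proof -
  obtain n where n: "n \<in> N" "w = n v" using w by (auto elim: orbE)
  have nB: "n \<in> Bij S" using psub_Bij[OF N n(1)] .
  show ?thesis
  proof
    show "orbit N w \<subseteq> orbit N v"
    proof
      fix x assume "x \<in> orbit N w"
      then obtain m where m: "m \<in> N" "x = m w" by (auto elim: orbE)
      have "compose S m n \<in> N" using psubD(3)[OF N m(1) n(1)] .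
      moreover have "compose S m n v = x" using m n v by (simp add: compose_def)
      ultimately show "x \<in> orbit N v" using orbI[of "compose S m n" N v] by simp
    qed
  next
    show "orbit N v \<subseteq> orbit N w"
    proof
      fix x assume "x \<in> orbit N v"
      then obtain m where m: "m \<in> N" "x = m v" by (auto elim: orbE)
      have "compose S m (ginv S n) \<in> N" using psubD(3)[OF N m(1) psubD(4)[OF N n(1)]] .
      moreover have "w \<in> S" using Bij_map[OF nB v] n(2) by simp
      moreover have "compose S m (ginv S n) w = x" using m n v nB calculation(2)
        by (simp add: compose_def ginv_left)
      ultimately show "x \<in> orbit N w" using orbI[of "compose S m (ginv S n)" N w] by simp
    qed
  qed
qed

lemma orb_eq_iff:
  assumes "psub S N" "v \<in> S" "w \<in> S"
  shows "orbit N v = orbit N w \<longleftrightarrow> w \<in> orbit N v"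
proof
  assume "orbit N v = orbit N w" then show "w \<in> orbit N v" using orb_mem[OF assms(1,3)] by simp
next
  assume "w \<in> orbit N v" then show "orbit N v = orbit N w" using orb_same[OF assms(1,2)] by simp
qed

lemma orb_n: "psub S N \<Longrightarrow> v \<in> S \<Longrightarrow> n \<in> N \<Longrightarrow> orbit N (n v) = orbit N v"
  using orb_same[of S N v "n v"] orbI[of n N v] by simp

lemma orb_img:
  assumes G: "psub S G" and N: "nrm S G N" and g: "g \<in> G" and v: "v \<in> S"
  shows "g ` orbit N v = orbit N (g v)"
proof -
  have ps: "psub S N" and NG: "N \<subseteq> G" and cj: "\<And>g n. g \<in> G \<Longrightarrow> n \<in> N \<Longrightarrow> compose S (compose S g n) (ginv S g) \<in> N"
    using N by (auto simp: nrm_def)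
  have gB: "g \<in> Bij S" using psub_Bij[OF G g] .
  have gi: "ginv S g \<in> G" using psubD(4)[OF G g] .
  have giB: "ginv S g \<in> Bij S" using ginv_Bij[OF gB] .
  show ?thesis
  proof
    show "g ` orbit N v \<subseteq> orbit N (g v)"
    proof
      fix x assume "x \<in> g ` orbit N v"
      then obtain n where n: "n \<in> N" "x = g (n v)" by (auto elim: orbE)
      have nB: "n \<in> Bij S" using psub_Bij[OF ps n(1)] .
      have "compose S (compose S g n) (ginv S g) (g v) = x"
        using n v gB nB by (simp add: compose_def ginv_left Bij_map)
      then show "x \<in> orbit N (g v)" using orbI[OF cj[OF g n(1)], of "g v"] by simp
    qed
  next
    show "orbit N (g v) \<subseteq> g ` orbit N v"
    proof
      fix x assume "x \<in> orbit N (g v)"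
      then obtain n where n: "n \<in> N" "x = n (g v)" by (auto elim: orbE)
      have nB: "n \<in> Bij S" using psub_Bij[OF ps n(1)] .
      have c: "compose S (compose S (ginv S g) n) (ginv S (ginv S g)) \<in> N" using cj[OF gi n(1)] .
      have gv: "g v \<in> S" using Bij_map[OF gB v] .
      have "ginv S (ginv S g) (ginv S g (g v)) = g v" using ginv_left[OF giB gv] .
      then have "ginv S (ginv S g) v = g v" using ginv_left[OF gB v] by simp
      then have "compose S (compose S (ginv S g) n) (ginv S (ginv S g)) v = ginv S g x"
        using n v gv nB by (simp add: compose_def)
      moreover have "x = g (ginv S g x)" using n gv nB gB by (simp add: Bij_map ginv_right)
      ultimately show "x \<in> g ` orbit N v" using c orbI[OF c, of v] by (auto intro: image_eqI)
    qed
  qed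
qed

lemma quot_VE: "A \<in> quot_V N S \<Longrightarrow> (\<And>v. v \<in> S \<Longrightarrow> A = orbit N v \<Longrightarrow> P) \<Longrightarrow> P"
  unfolding quot_V_def by blast

lemma quot_VI: "v \<in> S \<Longrightarrow> orbit N v \<in> quot_V N S"
  unfolding quot_V_def by blast

lemma img_inj: "g \<in> Bij S \<Longrightarrow> A \<subseteq> S \<Longrightarrow> B \<subseteq> S \<Longrightarrow> g ` A = g ` B \<Longrightarrow> A = B"
proof -
  assume a: "g \<in> Bij S" "A \<subseteq> S" "B \<subseteq> S" "g ` A = g ` B"
  have "inj_on g S" using Bij_bij[OF a(1)] by (simp add: bij_betw_def)
  then show "A = B" using inj_on_image_eq_iff[of g S A B] a(2-4) by simp
qed

lemma img_inj_on: "g \<in> Bij S \<Longrightarrow> inj_on (\<lambda>A. g ` A) (Pow S)"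
  by (rule inj_onI) (simp add: img_inj[of g S])


definition nbs :: "'b set \<Rightarrow> ('b \<Rightarrow> 'b \<Rightarrow> bool) \<Rightarrow> 'b \<Rightarrow> 'b set" where
  "nbs S R v = {u \<in> S. R v u}"

definition qnb :: "('a \<Rightarrow> 'a) set \<Rightarrow> 'a set \<Rightarrow> ('a \<Rightarrow> 'a \<Rightarrow> bool) \<Rightarrow> 'a \<Rightarrow> 'a set set" where
  "qnb N S R v = nbs (quot_V N S) (quot_E N S R) (orbit N v)"

locale hatg =
  fixes V :: "'a set" and E :: "'a \<Rightarrow> 'a \<Rightarrow> bool" and G :: "('a \<Rightarrow> 'a) set"
  assumes fin: "finite V" and sg: "simple_graph V E" and conn: "connected_graph V E"
    and tet: "tetravalent V E" and hat: "half_arc_transitive G V E"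
begin

lemma EV: "E x y \<Longrightarrow> x \<in> V \<and> y \<in> V"
  using sg by (simp add: simple_graph_def)

lemma Esym: "E x y \<Longrightarrow> E y x"
  using sg by (simp add: simple_graph_def)

lemma Eirr: "\<not> E x x"
  using sg by (simp add: simple_graph_def)

lemma Gsub: "subgroup G (BijGroup V)"
  using hat by (simp add: half_arc_transitive_def subgroup_Aut_def)

lemma psG: "psub V G"
  using subgroup_psub[OF Gsub] .

lemma GB: "g \<in> G \<Longrightarrow> g \<in> Bij V"
  using psub_Bij[OF psG] .

lemma gmap: "g \<in> G \<Longrightarrow> x \<in> V \<Longrightarrow> g x \<in> V"
  using Bij_map[OF GB] .

lemma aut: "g \<in> G \<Longrightarrow> x \<in> V \<Longrightarrow> y \<in> V \<Longrightarrow> E (g x) (g y) = E x y"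
  using hat by (simp add: half_arc_transitive_def subgroup_Aut_def is_automorphism_def)

lemma autE: "g \<in> G \<Longrightarrow> E x y \<Longrightarrow> E (g x) (g y)"
  using aut EV by metis

lemma vt: "u \<in> V \<Longrightarrow> w \<in> V \<Longrightarrow> \<exists>g\<in>G. g u = w"
  using hat by (simp add: half_arc_transitive_def vertex_transitive_def)

lemma et: "E a b \<Longrightarrow> E c d \<Longrightarrow> \<exists>g\<in>G. (g a = c \<and> g b = d) \<or> (g a = d \<and> g b = c)"
  using hat unfolding half_arc_transitive_def edge_transitive_def
  by (metis doubleton_eq_iff)

lemma not_at: "\<not> arc_transitive G V E"
  using hat by (simp add: half_arc_transitive_def)

lemma comp_app: "g \<in> G \<Longrightarrow> x \<in> V \<Longrightarrow> compose V g h x = g (h x)"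
  by (simp add: compose_def)

lemma Gcomp: "g \<in> G \<Longrightarrow> h \<in> G \<Longrightarrow> compose V g h \<in> G"
  using psubD(3)[OF psG] .

lemma Ginv: "g \<in> G \<Longrightarrow> ginv V g \<in> G"
  using psubD(4)[OF psG] .

lemma Gid: "(\<lambda>x\<in>V. x) \<in> G"
  using psubD(2)[OF psG] .

lemma ginvl: "g \<in> G \<Longrightarrow> x \<in> V \<Longrightarrow> ginv V g (g x) = x"
  using ginv_left[OF GB] .

lemma ginvr: "g \<in> G \<Longrightarrow> x \<in> V \<Longrightarrow> g (ginv V g x) = x"
  using ginv_right[OF GB] .

lemma ginvmap: "g \<in> G \<Longrightarrow> x \<in> V \<Longrightarrow> ginv V g x \<in> V"
  using ginv_map[OF GB] .

lemma Gfin: "finite G"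
proof -
  have "G \<subseteq> PiE V (\<lambda>_. V)"
  proof
    fix g assume g: "g \<in> G"
    show "g \<in> PiE V (\<lambda>_. V)"
      using Bij_ext[OF GB[OF g]] gmap[OF g] by (auto simp: PiE_def)
  qed
  moreover have "finite (PiE V (\<lambda>_. V))" using fin by (simp add: finite_PiE)
  ultimately show ?thesis using finite_subset by blast
qed

lemma nb_card: "v \<in> V \<Longrightarrow> card (nbs V E v) = 4"
  using tet by (simp add: tetravalent_def nbs_def)

lemma nb_fin: "finite (nbs V E v)"
  using fin by (simp add: nbs_def)

lemma nb_img: assumes g: "g \<in> G" and v: "v \<in> V" shows "nbs V E (g v) = g ` nbs V E v"
proof
  show "g ` nbs V E v \<subseteq> nbs V E (g v)"
    using autE[OF g] gmap[OF g] by (auto simp: nbs_def)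
next
  show "nbs V E (g v) \<subseteq> g ` nbs V E v"
  proof
    fix y assume y: "y \<in> nbs V E (g v)"
    then have yV: "y \<in> V" and e: "E (g v) y" by (auto simp: nbs_def)
    have "E (ginv V g (g v)) (ginv V g y)" using autE[OF Ginv[OF g] e] .
    then have "E v (ginv V g y)" using ginvl[OF g v] by simp
    moreover have "y = g (ginv V g y)" using ginvr[OF g yV] by simp
    ultimately show "y \<in> g ` nbs V E v" using ginvmap[OF g yV] by (auto simp: nbs_def)
  qed
qed

lemma no_rev:
  assumes g: "g \<in> G" and e: "E u w" and gu: "g u = w" and gw: "g w = u"
  shows False
proof -
  have uV: "u \<in> V" and wV: "w \<in> V" using EV[OF e] by auto
  have to: "\<exists>p\<in>G. p a = u \<and> p b = w" if ab: "E a b" for a b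
  proof -
    have aV: "a \<in> V" and bV: "b \<in> V" using EV[OF ab] by auto
    obtain p where p: "p \<in> G" "(p a = u \<and> p b = w) \<or> (p a = w \<and> p b = u)" using et[OF ab e] by blast
    show ?thesis
    proof (cases "p a = u \<and> p b = w")
      case True then show ?thesis using p(1) by blast
    next
      case False
      then have "p a = w" "p b = u" using p(2) by auto
      then have "compose V g p a = u" "compose V g p b = w"
        using comp_app[OF g aV] comp_app[OF g bV] gu gw by auto
      then show ?thesis using Gcomp[OF g p(1)] by blast
    qed
  qed
  have "arc_transitive G V E"
    unfolding arc_transitive_def
  proof (intro allI impI)
    fix a b c d assume ab: "E a b" and cd: "E c d"
    obtain p where p: "p \<in> G" "p a = u" "p b = w" using to[OF ab] by blast
    obtain q where q: "q \<in> G" "q c = u" "q d = w" using to[OF cd] by blast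
    have cV: "c \<in> V" and dV: "d \<in> V" using EV[OF cd] by auto
    have aV: "a \<in> V" and bV: "b \<in> V" using EV[OF ab] by auto
    have "compose V (ginv V q) p a = c" using comp_app[OF Ginv[OF q(1)] aV] p(2) q(2) ginvl[OF q(1) cV] by simp
    moreover have "compose V (ginv V q) p b = d" using comp_app[OF Ginv[OF q(1)] bV] p(3) q(3) ginvl[OF q(1) dV] by simp
    ultimately show "\<exists>k\<in>G. k a = c \<and> k b = d" using Gcomp[OF Ginv[OF q(1)] p(1)] by blast
  qed
  then show False using not_at by simp
qed


lemma qnb_eq:
  assumes N: "psub V N" and NG: "N \<subseteq> G" and v: "v \<in> V"
  shows "qnb N V E v = orbit N ` nbs V E v - {orbit N v}"
proof
  show "orbit N ` nbs V E v - {orbit N v} \<subseteq> qnb N V E v"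
  proof
    fix B assume B: "B \<in> orbit N ` nbs V E v - {orbit N v}"
    then obtain u where u: "u \<in> V" "E v u" "B = orbit N u" "B \<noteq> orbit N v" by (auto simp: nbs_def)
    have "v \<in> orbit N v" "u \<in> orbit N u" using orb_mem[OF N] u(1) v by auto
    then show "B \<in> qnb N V E v" using u v
      by (auto simp: qnb_def nbs_def quot_E_def intro!: quot_VI)
  qed
next
  show "qnb N V E v \<subseteq> orbit N ` nbs V E v - {orbit N v}"
  proof
    fix B assume "B \<in> qnb N V E v"
    then have B: "B \<in> quot_V N V" "orbit N v \<noteq> B" and ex: "\<exists>x\<in>orbit N v. \<exists>y\<in>B. E x y"
      by (auto simp: qnb_def nbs_def quot_E_def)
    obtain w where w: "w \<in> V" "B = orbit N w" using B(1) by (rule quot_VE)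
    obtain x y where x: "x \<in> orbit N v" and y: "y \<in> B" and e: "E x y" using ex by blast
    obtain n where n: "n \<in> N" "x = n v" using x by (rule orbE)
    have nG: "n \<in> G" using n(1) NG by auto
    have yV: "y \<in> V" using EV[OF e] by simp
    have "E (ginv V n (n v)) (ginv V n y)" using autE[OF Ginv[OF nG]] e n(2) by simp
    then have e2: "E v (ginv V n y)" using ginvl[OF nG v] by simp
    have "orbit N (ginv V n y) = orbit N y" using orb_n[OF N yV psubD(4)[OF N n(1)]] .
    also have "\<dots> = B" using orb_same[OF N w(1)] y w(2) by simp
    finally have "B = orbit N (ginv V n y)" by simp
    then show "B \<in> orbit N ` nbs V E v - {orbit N v}"
      using e2 ginvmap[OF nG yV] B(2) by (auto simp: nbs_def)
  qed
qed

lemma qnb_fin: "psub V N \<Longrightarrow> N \<subseteq> G \<Longrightarrow> v \<in> V \<Longrightarrow> finite (qnb N V E v)"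
  using qnb_eq nb_fin by simp

lemma qnb_card_le: "psub V N \<Longrightarrow> N \<subseteq> G \<Longrightarrow> v \<in> V \<Longrightarrow> card (qnb N V E v) \<le> 4"
proof -
  assume a: "psub V N" "N \<subseteq> G" "v \<in> V"
  have "card (qnb N V E v) \<le> card (orbit N ` nbs V E v)"
    using qnb_eq[OF a] nb_fin by (simp add: card_mono)
  also have "\<dots> \<le> card (nbs V E v)" using card_image_le nb_fin by blast
  finally show ?thesis using nb_card a(3) by simp
qed

lemma cov:
  assumes N: "psub V N" and NG: "N \<subseteq> G" and v: "v \<in> V" and c: "card (qnb N V E v) = 4"
  shows "inj_on (orbit N) (nbs V E v)" "\<And>u. u \<in> nbs V E v \<Longrightarrow> orbit N u \<noteq> orbit N v"
proof -
  let ?A = "orbit N ` nbs V E v"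
  have f: "finite ?A" using nb_fin by simp
  have le: "card ?A \<le> 4" using card_image_le[OF nb_fin[of v], of "orbit N"] nb_card[OF v] by simp
  have "card (?A - {orbit N v}) = 4" using c qnb_eq[OF N NG v] by simp
  moreover have "card (?A - {orbit N v}) \<le> card ?A" using f by (simp add: card_mono)
  ultimately have c4: "card ?A = 4" using le by simp
  then show "inj_on (orbit N) (nbs V E v)"
    using eq_card_imp_inj_on[OF nb_fin[of v]] nb_card[OF v] by simp
  show "orbit N u \<noteq> orbit N v" if u: "u \<in> nbs V E v" for u
  proof
    assume "orbit N u = orbit N v"
    then have "orbit N v \<in> ?A" using imageI[OF u, of "orbit N"] by simp
    then have "card (?A - {orbit N v}) = 3" using c4 f by simp
    then show False using c qnb_eq[OF N NG v] by simp
  qed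
qed

lemma qnb_img:
  assumes N: "nrm V G N" and g: "g \<in> G" and v: "v \<in> V"
  shows "qnb N V E (g v) = (\<lambda>A. g ` A) ` qnb N V E v"
proof -
  have ps: "psub V N" and NG: "N \<subseteq> G" using N by (auto simp: nrm_def)
  have gv: "g v \<in> V" using gmap[OF g v] .
  have oi: "\<And>x. x \<in> V \<Longrightarrow> orbit N (g x) = g ` orbit N x" using orb_img[OF psG N g] by simp
  have "qnb N V E (g v) = orbit N ` (g ` nbs V E v) - {orbit N (g v)}"
    using qnb_eq[OF ps NG gv] nb_img[OF g v] by simp
  also have "orbit N ` (g ` nbs V E v) = (\<lambda>A. g ` A) ` (orbit N ` nbs V E v)"
  proof -
    have X: "\<And>x. x \<in> nbs V E v \<Longrightarrow> orbit N (g x) = g ` orbit N x" using oi by (simp add: nbs_def)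
    have "(\<lambda>x. orbit N (g x)) ` nbs V E v = (\<lambda>x. g ` orbit N x) ` nbs V E v"
      by (rule image_cong) (simp_all add: X)
    then show ?thesis by (simp add: image_image)
  qed
  also have "(\<lambda>A. g ` A) ` (orbit N ` nbs V E v) - {orbit N (g v)}
      = (\<lambda>A. g ` A) ` (orbit N ` nbs V E v - {orbit N v})"
  proof -
    have inj: "inj_on (\<lambda>A. g ` A) (Pow V)" using img_inj_on[OF GB[OF g]] .
    have sub: "orbit N ` nbs V E v \<subseteq> Pow V" using orb_sub[OF ps] by (auto simp: nbs_def)
    have "orbit N v \<in> Pow V" using orb_sub[OF ps v] by simp
    then have s2: "{orbit N v} \<subseteq> Pow V" by simp
    have s1: "orbit N ` nbs V E v - {orbit N v} \<subseteq> Pow V" using sub by (rule subset_trans[rotated]) simp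
    have "(\<lambda>A. g ` A) ` (orbit N ` nbs V E v - {orbit N v}) =
       (\<lambda>A. g ` A) ` (orbit N ` nbs V E v) - (\<lambda>A. g ` A) ` {orbit N v}"
      using inj_on_image_set_diff[OF inj s1 s2] .
    then show ?thesis using oi[OF v] by simp
  qed
  finally show ?thesis using qnb_eq[OF ps NG v] by simp
qed

lemma qnb_card_img:
  assumes N: "nrm V G N" and g: "g \<in> G" and v: "v \<in> V"
  shows "card (qnb N V E (g v)) = card (qnb N V E v)"
proof -
  have ps: "psub V N" and NG: "N \<subseteq> G" using N by (auto simp: nrm_def)
  have "qnb N V E v \<subseteq> Pow V" using qnb_eq[OF ps NG v] orb_sub[OF ps] by (auto simp: nbs_def)
  then have "inj_on (\<lambda>A. g ` A) (qnb N V E v)" using inj_on_subset[OF img_inj_on[OF GB[OF g]]] by simp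
  then show ?thesis using qnb_img[OF N g v] card_image by simp
qed


end

locale hatD = hatg +
  fixes v0 a0 assumes e0: "E v0 a0"
begin

definition D :: "'a \<Rightarrow> 'a \<Rightarrow> bool" where
  "D x y \<longleftrightarrow> (\<exists>g\<in>G. g v0 = x \<and> g a0 = y)"

definition outD where "outD v = {a. D v a}"
definition inD where "inD v = {b. D b v}"

lemma v0V: "v0 \<in> V" and a0V: "a0 \<in> V" using EV[OF e0] by auto

lemma D_E: "D x y \<Longrightarrow> E x y"
  unfolding D_def using autE e0 by blast

lemma D_V: "D x y \<Longrightarrow> x \<in> V \<and> y \<in> V"
  using D_E EV by blast

lemma E_D: "E x y \<Longrightarrow> D x y \<or> D y x"
  unfolding D_def using et[OF e0] by blast

lemma D_asym: assumes "D x y" "D y x" shows False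
proof -
  obtain g where g: "g \<in> G" "g v0 = x" "g a0 = y" using assms(1) by (auto simp: D_def)
  obtain h where h: "h \<in> G" "h v0 = y" "h a0 = x" using assms(2) by (auto simp: D_def)
  have i1: "ginv V g y = a0" using ginvl[OF g(1) a0V] g(3) by simp
  have i2: "ginv V g x = v0" using ginvl[OF g(1) v0V] g(2) by simp
  have "compose V (ginv V g) h v0 = ginv V g (h v0)" using comp_app[OF Ginv[OF g(1)] v0V] .
  then have c1: "compose V (ginv V g) h v0 = a0" using h(2) i1 by simp
  have "compose V (ginv V g) h a0 = ginv V g (h a0)" using comp_app[OF Ginv[OF g(1)] a0V] .
  then have c2: "compose V (ginv V g) h a0 = v0" using h(3) i2 by simp
  note c1 c2
  then show False using no_rev[OF Gcomp[OF Ginv[OF g(1)] h(1)] e0] by simp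
qed

lemma D_inv: "g \<in> G \<Longrightarrow> D x y \<Longrightarrow> D (g x) (g y)"
proof -
  assume g: "g \<in> G" and "D x y"
  then obtain h where h: "h \<in> G" "h v0 = x" "h a0 = y" by (auto simp: D_def)
  have "compose V g h v0 = g x" "compose V g h a0 = g y"
    using comp_app[OF g v0V] comp_app[OF g a0V] h by auto
  then show ?thesis using Gcomp[OF g h(1)] by (auto simp: D_def)
qed

lemma D_out: assumes "D v a" "D v b" shows "\<exists>g\<in>G. g v = v \<and> g a = b"
proof -
  obtain h1 where h1: "h1 \<in> G" "h1 v0 = v" "h1 a0 = a" using assms(1) by (auto simp: D_def)
  obtain h2 where h2: "h2 \<in> G" "h2 v0 = v" "h2 a0 = b" using assms(2) by (auto simp: D_def)
  have vV: "v \<in> V" and aV: "a \<in> V" using D_V[OF assms(1)] by auto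
  have "ginv V h1 v = v0" using ginvl[OF h1(1) v0V] h1(2) by simp
  moreover have "ginv V h1 a = a0" using ginvl[OF h1(1) a0V] h1(3) by simp
  ultimately have "compose V h2 (ginv V h1) v = v" "compose V h2 (ginv V h1) a = b"
    using comp_app[OF h2(1) vV] comp_app[OF h2(1) aV] h2 by auto
  then show ?thesis using Gcomp[OF h2(1) Ginv[OF h1(1)]] by blast
qed

lemma D_in: assumes "D a v" "D b v" shows "\<exists>g\<in>G. g v = v \<and> g a = b"
proof -
  obtain h1 where h1: "h1 \<in> G" "h1 v0 = a" "h1 a0 = v" using assms(1) by (auto simp: D_def)
  obtain h2 where h2: "h2 \<in> G" "h2 v0 = b" "h2 a0 = v" using assms(2) by (auto simp: D_def)
  have vV: "v \<in> V" and aV: "a \<in> V" using D_V[OF assms(1)] by auto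
  have "ginv V h1 v = a0" using ginvl[OF h1(1) a0V] h1(3) by simp
  moreover have "ginv V h1 a = v0" using ginvl[OF h1(1) v0V] h1(2) by simp
  ultimately have "compose V h2 (ginv V h1) v = v" "compose V h2 (ginv V h1) a = b"
    using comp_app[OF h2(1) vV] comp_app[OF h2(1) aV] h2 by auto
  then show ?thesis using Gcomp[OF h2(1) Ginv[OF h1(1)]] by blast
qed

lemma nb_split: "nbs V E v = outD v \<union> inD v"
proof
  show "nbs V E v \<subseteq> outD v \<union> inD v"
    using E_D by (auto simp: nbs_def outD_def inD_def)
  show "outD v \<union> inD v \<subseteq> nbs V E v"
    using D_E D_V Esym by (auto simp: nbs_def outD_def inD_def)
qed

lemma out_in_disj: "outD v \<inter> inD v = {}"
  using D_asym by (auto simp: outD_def inD_def)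

lemma out_sub: "outD v \<subseteq> V" and in_sub: "inD v \<subseteq> V"
  using D_V by (auto simp: outD_def inD_def)

lemma out_fin: "finite (outD v)" and in_fin: "finite (inD v)"
  using out_sub in_sub fin finite_subset by metis+

lemma out_img: assumes g: "g \<in> G" and v: "v \<in> V" shows "outD (g v) = g ` outD v"
proof
  show "g ` outD v \<subseteq> outD (g v)" using D_inv[OF g] by (auto simp: outD_def)
  show "outD (g v) \<subseteq> g ` outD v"
  proof
    fix y assume "y \<in> outD (g v)"
    then have d: "D (g v) y" by (simp add: outD_def)
    have yV: "y \<in> V" using D_V[OF d] by simp
    have "D (ginv V g (g v)) (ginv V g y)" using D_inv[OF Ginv[OF g] d] .
    then have "D v (ginv V g y)" using ginvl[OF g v] by simp
    moreover have "y = g (ginv V g y)" using ginvr[OF g yV] by simp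
    ultimately show "y \<in> g ` outD v" by (auto simp: outD_def)
  qed
qed

lemma in_img: assumes g: "g \<in> G" and v: "v \<in> V" shows "inD (g v) = g ` inD v"
proof
  show "g ` inD v \<subseteq> inD (g v)" using D_inv[OF g] by (auto simp: inD_def)
  show "inD (g v) \<subseteq> g ` inD v"
  proof
    fix y assume "y \<in> inD (g v)"
    then have d: "D y (g v)" by (simp add: inD_def)
    have yV: "y \<in> V" using D_V[OF d] by simp
    have "D (ginv V g y) (ginv V g (g v))" using D_inv[OF Ginv[OF g] d] .
    then have "D (ginv V g y) v" using ginvl[OF g v] by simp
    moreover have "y = g (ginv V g y)" using ginvr[OF g yV] by simp
    ultimately show "y \<in> g ` inD v" by (auto simp: inD_def)
  qed
qed

lemma orbimg_img:
  assumes N: "nrm V G N" and g: "g \<in> G" and X: "Y \<subseteq> V"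
  shows "orbit N ` (g ` Y) = (\<lambda>A. g ` A) ` (orbit N ` Y)"
proof -
  have oi: "\<And>x. x \<in> Y \<Longrightarrow> orbit N (g x) = g ` orbit N x" using orb_img[OF psG N g] X by auto
  have "(\<lambda>x. orbit N (g x)) ` Y = (\<lambda>x. g ` orbit N x) ` Y"
    by (rule image_cong) (simp_all add: oi)
  then show ?thesis by (simp add: image_image)
qed

lemma card_imgimg:
  assumes N: "nrm V G N" and g: "g \<in> G" and X: "Y \<subseteq> V"
  shows "card ((\<lambda>A. g ` A) ` (orbit N ` Y)) = card (orbit N ` Y)"
proof -
  have ps: "psub V N" using N by (simp add: nrm_def)
  have "orbit N ` Y \<subseteq> Pow V" using orb_sub[OF ps] X by auto
  then have "inj_on (\<lambda>A. g ` A) (orbit N ` Y)" using inj_on_subset[OF img_inj_on[OF GB[OF g]]] by simp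
  then show ?thesis using card_image by blast
qed

lemma OO_card: "nrm V G N \<Longrightarrow> g \<in> G \<Longrightarrow> v \<in> V \<Longrightarrow> card (orbit N ` outD (g v)) = card (orbit N ` outD v)"
  using out_img orbimg_img card_imgimg out_sub by simp

lemma II_card: "nrm V G N \<Longrightarrow> g \<in> G \<Longrightarrow> v \<in> V \<Longrightarrow> card (orbit N ` inD (g v)) = card (orbit N ` inD v)"
  using in_img orbimg_img card_imgimg in_sub by simp


lemma Q_out:
  assumes N: "nrm V G N" and u: "u \<in> V"
  shows "{B. (orbit N u, B) \<in> {(orbit N x, orbit N y) | x y. D x y}} = orbit N ` outD u"
proof
  have ps: "psub V N" and NG: "N \<subseteq> G" using N by (auto simp: nrm_def)
  show "{B. (orbit N u, B) \<in> {(orbit N x, orbit N y) | x y. D x y}} \<subseteq> orbit N ` outD u"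
  proof
    fix B assume "B \<in> {B. (orbit N u, B) \<in> {(orbit N x, orbit N y) | x y. D x y}}"
    then obtain x y where xy: "orbit N u = orbit N x" "B = orbit N y" "D x y" by blast
    have xV: "x \<in> V" and yV: "y \<in> V" using D_V[OF xy(3)] by auto
    have "u \<in> orbit N x" using orb_eq_iff[OF ps xV u] xy(1) by simp
    then obtain n where n: "n \<in> N" "u = n x" by (rule orbE)
    have "D u (n y)" using D_inv[OF subsetD[OF NG n(1)] xy(3)] n(2) by simp
    moreover have "orbit N (n y) = B" using orb_n[OF ps yV n(1)] xy(2) by simp
    ultimately show "B \<in> orbit N ` outD u" unfolding outD_def by (metis imageI mem_Collect_eq)
  qed
  show "orbit N ` outD u \<subseteq> {B. (orbit N u, B) \<in> {(orbit N x, orbit N y) | x y. D x y}}"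
    by (auto simp: outD_def)
qed

lemma Q_in:
  assumes N: "nrm V G N" and u: "u \<in> V"
  shows "{A. (A, orbit N u) \<in> {(orbit N x, orbit N y) | x y. D x y}} = orbit N ` inD u"
proof
  have ps: "psub V N" and NG: "N \<subseteq> G" using N by (auto simp: nrm_def)
  show "{A. (A, orbit N u) \<in> {(orbit N x, orbit N y) | x y. D x y}} \<subseteq> orbit N ` inD u"
  proof
    fix A assume "A \<in> {A. (A, orbit N u) \<in> {(orbit N x, orbit N y) | x y. D x y}}"
    then obtain x y where xy: "orbit N u = orbit N y" "A = orbit N x" "D x y" by blast
    have xV: "x \<in> V" and yV: "y \<in> V" using D_V[OF xy(3)] by auto
    have "u \<in> orbit N y" using orb_eq_iff[OF ps yV u] xy(1) by simp
    then obtain n where n: "n \<in> N" "u = n y" by (rule orbE)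
    have "D (n x) u" using D_inv[OF subsetD[OF NG n(1)] xy(3)] n(2) by simp
    moreover have "orbit N (n x) = A" using orb_n[OF ps xV n(1)] xy(2) by simp
    ultimately show "A \<in> orbit N ` inD u" unfolding inD_def by (metis imageI mem_Collect_eq)
  qed
  show "orbit N ` inD u \<subseteq> {A. (A, orbit N u) \<in> {(orbit N x, orbit N y) | x y. D x y}}"
    by (auto simp: inD_def)
qed

lemma OI_eq:
  assumes N: "nrm V G N" and v: "v \<in> V"
  shows "card (orbit N ` outD v) = card (orbit N ` inD v)"
proof -
  have ps: "psub V N" and NG: "N \<subseteq> G" using N by (auto simp: nrm_def)
  define Q where "Q = {(orbit N x, orbit N y) | x y. D x y}"
  define W where "W = quot_V N V"
  have Wfin: "finite W" using fin by (simp add: W_def quot_V_def)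
  have QW: "Q \<subseteq> W \<times> W" using D_V by (auto simp: Q_def W_def intro!: quot_VI)
  have co: "card {B. (A, B) \<in> Q} = card (orbit N ` outD v0)" if A: "A \<in> W" for A
  proof -
    obtain u where u: "u \<in> V" "A = orbit N u" using A unfolding W_def by (rule quot_VE)
    obtain g where g: "g \<in> G" "g v0 = u" using vt[OF v0V u(1)] by blast
    have "card {B. (A, B) \<in> Q} = card (orbit N ` outD u)" using Q_out[OF N u(1)] u(2) by (simp add: Q_def)
    also have "\<dots> = card (orbit N ` outD v0)" using OO_card[OF N g(1) v0V] g(2) by simp
    finally show ?thesis .
  qed
  have ci: "card {A. (A, B) \<in> Q} = card (orbit N ` inD v0)" if B: "B \<in> W" for B
  proof -
    obtain u where u: "u \<in> V" "B = orbit N u" using B unfolding W_def by (rule quot_VE)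
    obtain g where g: "g \<in> G" "g v0 = u" using vt[OF v0V u(1)] by blast
    have "card {A. (A, B) \<in> Q} = card (orbit N ` inD u)" using Q_in[OF N u(1)] u(2) by (simp add: Q_def)
    also have "\<dots> = card (orbit N ` inD v0)" using II_card[OF N g(1) v0V] g(2) by simp
    finally show ?thesis .
  qed
  have f1: "\<forall>A\<in>W. finite {B. (A, B) \<in> Q}"
    using QW Wfin by (auto intro: finite_subset[of _ W])
  have f2: "\<forall>B\<in>W. finite {A. (A, B) \<in> Q}"
    using QW Wfin by (auto intro: finite_subset[of _ W])
  have "Q = Sigma W (\<lambda>A. {B. (A, B) \<in> Q})" using QW by auto
  then have "card Q = (\<Sum>A\<in>W. card {B. (A, B) \<in> Q})" using card_SigmaI[OF Wfin f1] by simp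
  also have "\<dots> = card W * card (orbit N ` outD v0)" using co by simp
  finally have c1: "card Q = card W * card (orbit N ` outD v0)" .
  have "converse Q = Sigma W (\<lambda>B. {A. (A, B) \<in> Q})" using QW by auto
  then have "card (converse Q) = (\<Sum>B\<in>W. card {A. (A, B) \<in> Q})" using card_SigmaI[OF Wfin f2] by simp
  also have "\<dots> = card W * card (orbit N ` inD v0)" using ci by simp
  finally have c2: "card Q = card W * card (orbit N ` inD v0)" by simp
  have "W \<noteq> {}" using v0V by (auto simp: W_def quot_V_def)
  then have "card W > 0" using Wfin by (simp add: card_gt_0_iff)
  then have e: "card (orbit N ` outD v0) = card (orbit N ` inD v0)" using c1 c2 by simp
  obtain g where g: "g \<in> G" "g v0 = v" using vt[OF v0V v] by blast
  show ?thesis using OO_card[OF N g(1) v0V] II_card[OF N g(1) v0V] g(2) e by simp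
qed


lemma valB:
  assumes N: "nrm V G N" and v: "v \<in> V"
  shows "card (qnb N V E v) \<le> 2 \<or> card (qnb N V E v) = 4"
proof -
  have ps: "psub V N" and NG: "N \<subseteq> G" using N by (auto simp: nrm_def)
  define Ou where "Ou = orbit N ` outD v"
  define Iv where "Iv = orbit N ` inD v"
  define Z where "Z = orbit N v"
  have q: "qnb N V E v = (Ou \<union> Iv) - {Z}"
    using qnb_eq[OF ps NG v] nb_split[of v] by (simp add: Ou_def Iv_def Z_def image_Un)
  have fOu: "finite Ou" and fIv: "finite Iv" using out_fin in_fin by (auto simp: Ou_def Iv_def)
  have Ostab: "(\<lambda>A. g ` A) ` Ou = Ou" if g: "g \<in> G" "g v = v" for g
  proof -
    have e: "g ` outD v = outD v" using out_img[OF g(1) v] g(2) by simp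
    have "orbit N ` (g ` outD v) = (\<lambda>A. g ` A) ` (orbit N ` outD v)" using orbimg_img[OF N g(1) out_sub] .
    then show ?thesis using e by (simp add: Ou_def)
  qed
  have Istab: "(\<lambda>A. g ` A) ` Iv = Iv" if g: "g \<in> G" "g v = v" for g
  proof -
    have e: "g ` inD v = inD v" using in_img[OF g(1) v] g(2) by simp
    have "orbit N ` (g ` inD v) = (\<lambda>A. g ` A) ` (orbit N ` inD v)" using orbimg_img[OF N g(1) in_sub] .
    then show ?thesis using e by (simp add: Iv_def)
  qed
  have oimg: "\<And>g x. g \<in> G \<Longrightarrow> x \<in> V \<Longrightarrow> g ` orbit N x = orbit N (g x)" using orb_img[OF psG N] .
  have OI: "Ou \<subseteq> Iv" if ne: "Ou \<inter> Iv \<noteq> {}"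
  proof
    obtain Xa where Xa: "Xa \<in> Ou" "Xa \<in> Iv" using ne by blast
    obtain a where a: "a \<in> outD v" "Xa = orbit N a" using Xa(1) by (auto simp: Ou_def)
    fix Y assume "Y \<in> Ou"
    then obtain b where b: "b \<in> outD v" "Y = orbit N b" by (auto simp: Ou_def)
    obtain g where g: "g \<in> G" "g v = v" "g a = b" using D_out[of v a b] a(1) b(1) by (auto simp: outD_def)
    have "g ` Xa = Y" using oimg[OF g(1)] a out_sub b g(3) by auto
    moreover have "g ` Xa \<in> Iv" using Istab[OF g(1,2)] Xa(2) by blast
    ultimately show "Y \<in> Iv" by simp
  qed
  have IO: "Iv \<subseteq> Ou" if ne: "Ou \<inter> Iv \<noteq> {}"
  proof
    obtain Xa where Xa: "Xa \<in> Ou" "Xa \<in> Iv" using ne by blast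
    obtain a where a: "a \<in> inD v" "Xa = orbit N a" using Xa(2) by (auto simp: Iv_def)
    fix Y assume "Y \<in> Iv"
    then obtain b where b: "b \<in> inD v" "Y = orbit N b" by (auto simp: Iv_def)
    obtain g where g: "g \<in> G" "g v = v" "g a = b" using D_in[of a v b] a(1) b(1) by (auto simp: inD_def)
    have "g ` Xa = Y" using oimg[OF g(1)] a in_sub b g(3) by auto
    moreover have "g ` Xa \<in> Ou" using Ostab[OF g(1,2)] Xa(1) by blast
    ultimately show "Y \<in> Ou" by simp
  qed
  have ZO: "Ou = {Z}" if z: "Z \<in> Ou"
  proof -
    obtain a where a: "a \<in> outD v" "Z = orbit N a" using z by (auto simp: Ou_def)
    have "Y = Z" if Y: "Y \<in> Ou" for Y
    proof -
      obtain b where b: "b \<in> outD v" "Y = orbit N b" using Y by (auto simp: Ou_def)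
      obtain g where g: "g \<in> G" "g v = v" "g a = b" using D_out[of v a b] a(1) b(1) by (auto simp: outD_def)
      have "Y = g ` orbit N a" using oimg[OF g(1)] a(1) out_sub b g(3) by auto
      also have "\<dots> = g ` orbit N v" using a(2) by (simp add: Z_def)
      also have "\<dots> = Z" using oimg[OF g(1) v] g(2) by (simp add: Z_def)
      finally show ?thesis .
    qed
    then show ?thesis using z by blast
  qed
  have ZI: "Iv = {Z}" if z: "Z \<in> Iv"
  proof -
    obtain a where a: "a \<in> inD v" "Z = orbit N a" using z by (auto simp: Iv_def)
    have "Y = Z" if Y: "Y \<in> Iv" for Y
    proof -
      obtain b where b: "b \<in> inD v" "Y = orbit N b" using Y by (auto simp: Iv_def)
      obtain g where g: "g \<in> G" "g v = v" "g a = b" using D_in[of a v b] a(1) b(1) by (auto simp: inD_def)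
      have "Y = g ` orbit N a" using oimg[OF g(1)] a(1) in_sub b g(3) by auto
      also have "\<dots> = g ` orbit N v" using a(2) by (simp add: Z_def)
      also have "\<dots> = Z" using oimg[OF g(1) v] g(2) by (simp add: Z_def)
      finally show ?thesis .
    qed
    then show ?thesis using z by blast
  qed
  have k: "card Ou = card Iv" using OI_eq[OF N v] by (simp add: Ou_def Iv_def)
  have "card Ou \<le> card (outD v)" using card_image_le[OF out_fin] by (simp add: Ou_def)
  moreover have "card Iv \<le> card (inD v)" using card_image_le[OF in_fin] by (simp add: Iv_def)
  moreover have "card (outD v) + card (inD v) = 4"
    using card_Un_disjoint[OF out_fin in_fin out_in_disj] nb_split[of v] nb_card[OF v] by simp
  ultimately have k2: "card Ou \<le> 2" using k by simp
  show ?thesis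
  proof (cases "Ou \<inter> Iv = {}")
    case False
    then have "Ou = Iv" using OI IO by blast
    then have "qnb N V E v \<subseteq> Ou" using q by blast
    then have "card (qnb N V E v) \<le> card Ou" using fOu by (simp add: card_mono)
    then show ?thesis using k2 by simp
  next
    case True
    show ?thesis
    proof (cases "Z \<in> Ou")
      case True
      have o1: "Ou = {Z}" using ZO[OF True] .
      then have c1: "card Iv = 1" using k by simp
      have "qnb N V E v \<subseteq> Iv" using q o1 by blast
      then have "card (qnb N V E v) \<le> card Iv" using card_mono[OF fIv] by simp
      then show ?thesis using c1 by linarith
    next
      case zo: False
      show ?thesis
      proof (cases "Z \<in> Iv")
        case True
        have o1: "Iv = {Z}" using ZI[OF True] .
        then have c1: "card Ou = 1" using k by simp
        have "qnb N V E v \<subseteq> Ou" using q o1 by blast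
        then have "card (qnb N V E v) \<le> card Ou" using card_mono[OF fOu] by simp
        then show ?thesis using c1 by linarith
      next
        case False
        then have "qnb N V E v = Ou \<union> Iv" using q zo by blast
        then have "card (qnb N V E v) = card Ou + card Iv" using card_Un_disjoint[OF fOu fIv] \<open>Ou \<inter> Iv = {}\<close> by simp
        then show ?thesis using k k2 by (cases "card Ou \<le> 1") auto
      qed
    qed
  qed
qed


lemma dich:
  assumes N: "nrm V G N"
  shows "valency_le 2 (quot_V N V) (quot_E N V E) \<or> tetravalent (quot_V N V) (quot_E N V E)"
proof -
  have ps: "psub V N" and NG: "N \<subseteq> G" using N by (auto simp: nrm_def)
  have un: "card (qnb N V E v) = card (qnb N V E v0)" if v: "v \<in> V" for v
  proof -
    obtain g where g: "g \<in> G" "g v0 = v" using vt[OF v0V v] by blast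
    show ?thesis using qnb_card_img[OF N g(1) v0V] g(2) by simp
  qed
  have nq: "{B \<in> quot_V N V. quot_E N V E (orbit N v) B} = qnb N V E v" for v
    by (simp add: qnb_def nbs_def)
  show ?thesis
  proof (cases "card (qnb N V E v0) = 4")
    case True
    have "tetravalent (quot_V N V) (quot_E N V E)"
      unfolding tetravalent_def
    proof
      fix A assume "A \<in> quot_V N V"
      then obtain v where v: "v \<in> V" "A = orbit N v" by (rule quot_VE)
      show "card {u \<in> quot_V N V. quot_E N V E A u} = 4" using nq[of v] un[OF v(1)] True v(2) by simp
    qed
    then show ?thesis by simp
  next
    case False
    then have le: "card (qnb N V E v0) \<le> 2" using valB[OF N v0V] by simp
    have "valency_le 2 (quot_V N V) (quot_E N V E)"
      unfolding valency_le_def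
    proof
      fix A assume "A \<in> quot_V N V"
      then obtain v where v: "v \<in> V" "A = orbit N v" by (rule quot_VE)
      show "finite {u \<in> quot_V N V. quot_E N V E A u} \<and> card {u \<in> quot_V N V. quot_E N V E A u} \<le> 2"
        using nq[of v] un[OF v(1)] le v(2) qnb_fin[OF ps NG v(1)] by simp
    qed
    then show ?thesis by simp
  qed
qed

end

context hatg
begin

lemma Vne: "V \<noteq> {}"
  using conn by (simp add: connected_graph_def)

lemma reach: "u \<in> V \<Longrightarrow> w \<in> V \<Longrightarrow> (\<lambda>x y. E x y \<and> x \<in> V \<and> y \<in> V)\<^sup>*\<^sup>* u w"
  using conn by (simp add: connected_graph_def)

lemma tet_qnb: "tetravalent (quot_V N V) (quot_E N V E) \<Longrightarrow> v \<in> V \<Longrightarrow> card (qnb N V E v) = 4"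
  unfolding tetravalent_def qnb_def nbs_def using quot_VI[of v V N] by simp

lemma kernel:
  assumes N: "nrm V G N" and T: "tetravalent (quot_V N V) (quot_E N V E)"
  shows "action_kernel G N V = N"
proof -
  have ps: "psub V N" and NG: "N \<subseteq> G" using N by (auto simp: nrm_def)
  have c4: "\<And>v. v \<in> V \<Longrightarrow> card (qnb N V E v) = 4" using tet_qnb[OF T] .
  show ?thesis
  proof
    show "N \<subseteq> action_kernel G N V"
    proof
      fix n assume n: "n \<in> N"
      have nG: "n \<in> G" using n NG by auto
      have "(\<lambda>A\<in>quot_V N V. n ` A) = (\<lambda>A\<in>quot_V N V. A)"
      proof (rule restrict_ext)
        fix A assume "A \<in> quot_V N V"
        then obtain v where v: "v \<in> V" "A = orbit N v" by (rule quot_VE)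
        show "n ` A = A" using orb_img[OF psG N nG v(1)] orb_n[OF ps v(1) n] v(2) by simp
      qed
      then show "n \<in> action_kernel G N V" using nG by (simp add: action_kernel_def induced_perm_def)
    qed
  next
    show "action_kernel G N V \<subseteq> N"
    proof
      fix g assume "g \<in> action_kernel G N V"
      then have g: "g \<in> G" and eq: "(\<lambda>A\<in>quot_V N V. g ` A) = (\<lambda>A\<in>quot_V N V. A)"
        by (auto simp: action_kernel_def induced_perm_def)
      have fix1: "orbit N (g x) = orbit N x" if x: "x \<in> V" for x
      proof -
        have "(\<lambda>A\<in>quot_V N V. g ` A) (orbit N x) = (\<lambda>A\<in>quot_V N V. A) (orbit N x)" using eq by simp
        then have "g ` orbit N x = orbit N x" using quot_VI[OF x] by simp
        then show ?thesis using orb_img[OF psG N g x] by simp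
      qed
      obtain v where v: "v \<in> V" using Vne by blast
      have "g v \<in> orbit N v" using fix1[OF v] orb_mem[OF ps gmap[OF g v]] by simp
      then obtain n where n: "n \<in> N" "g v = n v" by (rule orbE)
      have nG: "n \<in> G" using n NG by auto
      define h where "h = compose V (ginv V n) g"
      have hG: "h \<in> G" using Gcomp[OF Ginv[OF nG] g] by (simp add: h_def)
      have happ: "h x = ginv V n (g x)" if "x \<in> V" for x using comp_app[OF Ginv[OF nG] that] by (simp add: h_def)
      have hv: "h v = v" using happ[OF v] n(2) ginvl[OF nG v] by simp
      have horb: "orbit N (h x) = orbit N x" if x: "x \<in> V" for x
        using happ[OF x] orb_n[OF ps gmap[OF g x] psubD(4)[OF ps n(1)]] fix1[OF x] by simp
      have hfix: "h x = x" if x: "x \<in> V" for x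
      proof -
        have "(\<lambda>x y. E x y \<and> x \<in> V \<and> y \<in> V)\<^sup>*\<^sup>* v x" using reach[OF v x] .
        then show ?thesis
        proof (induction rule: rtranclp_induct)
          case base then show ?case using hv .
        next
          case (step y z)
          then have e: "E y z" and yV: "y \<in> V" and zV: "z \<in> V" and hy: "h y = y" by auto
          have "E y (h z)" using autE[OF hG e] hy by simp
          then have "h z \<in> nbs V E y" using gmap[OF hG zV] by (simp add: nbs_def)
          moreover have "z \<in> nbs V E y" using e zV by (simp add: nbs_def)
          moreover have "orbit N (h z) = orbit N z" using horb[OF zV] .
          ultimately show ?case using inj_onD[OF cov(1)[OF ps NG yV c4[OF yV]]] by simp
        qed
      qed
      have "g = n"
      proof (rule Bij_eqI[OF GB[OF g] GB[OF nG]])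
        fix x assume x: "x \<in> V"
        have "n (h x) = g x" using happ[OF x] ginvr[OF nG gmap[OF g x]] by simp
        then show "g x = n x" using hfix[OF x] by simp
      qed
      then show "g \<in> N" using n(1) by simp
    qed
  qed
qed

lemma quot_conn:
  assumes ps: "psub V N"
  shows "connected_graph (quot_V N V) (quot_E N V E)"
proof -
  let ?R = "\<lambda>A B. quot_E N V E A B \<and> A \<in> quot_V N V \<and> B \<in> quot_V N V"
  have main: "?R\<^sup>*\<^sup>* (orbit N u) (orbit N x)" if u: "u \<in> V" and x: "x \<in> V" for u x
  proof -
    have "(\<lambda>x y. E x y \<and> x \<in> V \<and> y \<in> V)\<^sup>*\<^sup>* u x" using reach[OF u x] .
    then show ?thesis
    proof (induction rule: rtranclp_induct)
      case base then show ?case by simp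
    next
      case (step y z)
      then have e: "E y z" and yV: "y \<in> V" and zV: "z \<in> V" by auto
      show ?case
      proof (cases "orbit N y = orbit N z")
        case True then show ?thesis using step.IH by simp
      next
        case False
        have "?R (orbit N y) (orbit N z)"
          using False e orb_mem[OF ps yV] orb_mem[OF ps zV] quot_VI[OF yV] quot_VI[OF zV]
          by (auto simp: quot_E_def)
        then show ?thesis by (rule rtranclp.rtrancl_into_rtrancl[OF step.IH])
      qed
    qed
  qed
  show ?thesis unfolding connected_graph_def
  proof (intro conjI ballI)
    show "quot_V N V \<noteq> {}" using Vne by (simp add: quot_V_def)
  next
    fix A B assume A: "A \<in> quot_V N V" and B: "B \<in> quot_V N V"
    obtain u where u: "u \<in> V" "A = orbit N u" using A by (rule quot_VE)
    obtain w where w: "w \<in> V" "B = orbit N w" using B by (rule quot_VE)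
    show "?R\<^sup>*\<^sup>* A B" using main[OF u(1) w(1)] u(2) w(2) by simp
  qed
qed


lemma qV_sub: "psub V N \<Longrightarrow> A \<in> quot_V N V \<Longrightarrow> A \<subseteq> V"
  by (metis orb_sub quot_VE)

lemma ind_app: "A \<in> quot_V N V \<Longrightarrow> induced_perm N V g A = g ` A"
  by (simp add: induced_perm_def)

lemma img_qV: "nrm V G N \<Longrightarrow> g \<in> G \<Longrightarrow> A \<in> quot_V N V \<Longrightarrow> g ` A \<in> quot_V N V"
proof -
  assume N: "nrm V G N" and g: "g \<in> G" and A: "A \<in> quot_V N V"
  obtain v where v: "v \<in> V" "A = orbit N v" using A by (rule quot_VE)
  show ?thesis using orb_img[OF psG N g v(1)] v(2) quot_VI[OF gmap[OF g v(1)]] by simp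
qed

lemma img_ginv: "g \<in> G \<Longrightarrow> A \<subseteq> V \<Longrightarrow> g ` (ginv V g ` A) = A"
proof -
  assume g: "g \<in> G" and A: "A \<subseteq> V"
  have "\<And>x. x \<in> A \<Longrightarrow> g (ginv V g x) = x" using ginvr[OF g] A by auto
  then have "(\<lambda>x. g (ginv V g x)) ` A = (\<lambda>x. x) ` A" by (rule image_cong[OF refl])
  then show ?thesis by (simp add: image_image)
qed

lemma img_ginv2: "g \<in> G \<Longrightarrow> A \<subseteq> V \<Longrightarrow> ginv V g ` (g ` A) = A"
proof -
  assume g: "g \<in> G" and A: "A \<subseteq> V"
  have "\<And>x. x \<in> A \<Longrightarrow> ginv V g (g x) = x" using ginvl[OF g] A by auto
  then have "(\<lambda>x. ginv V g (g x)) ` A = (\<lambda>x. x) ` A" by (rule image_cong[OF refl])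
  then show ?thesis by (simp add: image_image)
qed

lemma ind_Bij:
  assumes N: "nrm V G N" and g: "g \<in> G"
  shows "induced_perm N V g \<in> Bij (quot_V N V)"
proof -
  have ps: "psub V N" using N by (simp add: nrm_def)
  let ?W = "quot_V N V"
  have inj: "inj_on (\<lambda>A. g ` A) ?W"
    using inj_on_subset[OF img_inj_on[OF GB[OF g]]] qV_sub[OF ps] by blast
  have "(\<lambda>A. g ` A) ` ?W = ?W"
  proof
    show "(\<lambda>A. g ` A) ` ?W \<subseteq> ?W" using img_qV[OF N g] by blast
    show "?W \<subseteq> (\<lambda>A. g ` A) ` ?W"
    proof
      fix A assume A: "A \<in> ?W"
      have "ginv V g ` A \<in> ?W" using img_qV[OF N Ginv[OF g] A] .
      moreover have "g ` (ginv V g ` A) = A" using img_ginv[OF g qV_sub[OF ps A]] .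
      ultimately show "A \<in> (\<lambda>A. g ` A) ` ?W" by (metis imageI)
    qed
  qed
  then have "bij_betw (\<lambda>A. g ` A) ?W ?W" using inj by (simp add: bij_betw_def)
  then have "bij_betw (induced_perm N V g) ?W ?W"
    by (rule bij_betw_cong[THEN iffD1, rotated]) (simp add: induced_perm_def)
  then show ?thesis by (simp add: Bij_def induced_perm_def)
qed

lemma ind_id: "psub V N \<Longrightarrow> induced_perm N V (\<lambda>x\<in>V. x) = (\<lambda>A\<in>quot_V N V. A)"
proof -
  assume ps: "psub V N"
  show ?thesis unfolding induced_perm_def
  proof (rule restrict_ext)
    fix A assume A: "A \<in> quot_V N V"
    have "\<And>x. x \<in> A \<Longrightarrow> (\<lambda>x\<in>V. x) x = x" using qV_sub[OF ps A] by auto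
    then have "(\<lambda>x\<in>V. x) ` A = (\<lambda>x. x) ` A" by (rule image_cong[OF refl])
    then show "(\<lambda>x\<in>V. x) ` A = A" by simp
  qed
qed

lemma ind_comp:
  assumes N: "nrm V G N" and g: "g \<in> G" and h: "h \<in> G"
  shows "induced_perm N V (compose V g h) = compose (quot_V N V) (induced_perm N V g) (induced_perm N V h)"
proof (rule extensionalityI)
  have ps: "psub V N" using N by (simp add: nrm_def)
  show "induced_perm N V (compose V g h) \<in> extensional (quot_V N V)" by (simp add: induced_perm_def)
  show "compose (quot_V N V) (induced_perm N V g) (induced_perm N V h) \<in> extensional (quot_V N V)"
    by (rule compose_extensional)
  fix A assume A: "A \<in> quot_V N V"
  have "\<And>x. x \<in> A \<Longrightarrow> compose V g h x = g (h x)" using qV_sub[OF ps A] comp_app[OF g] by auto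
  then have "(compose V g h) ` A = (\<lambda>x. g (h x)) ` A" by (rule image_cong[OF refl])
  then have "(compose V g h) ` A = g ` h ` A" by (simp add: image_image)
  moreover have "h ` A \<in> quot_V N V" using img_qV[OF N h A] .
  ultimately show "induced_perm N V (compose V g h) A = compose (quot_V N V) (induced_perm N V g) (induced_perm N V h) A"
    using A by (simp add: compose_def induced_perm_def)
qed

lemma ind_inv:
  assumes N: "nrm V G N" and g: "g \<in> G"
  shows "induced_perm N V (ginv V g) = ginv (quot_V N V) (induced_perm N V g)"
proof (rule extensionalityI)
  have ps: "psub V N" using N by (simp add: nrm_def)
  show "induced_perm N V (ginv V g) \<in> extensional (quot_V N V)" by (simp add: induced_perm_def)
  show "ginv (quot_V N V) (induced_perm N V g) \<in> extensional (quot_V N V)" by (simp add: ginv_def)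
  fix A assume A: "A \<in> quot_V N V"
  have inj: "inj_on (induced_perm N V g) (quot_V N V)"
    using Bij_bij[OF ind_Bij[OF N g]] by (simp add: bij_betw_def)
  have B: "ginv V g ` A \<in> quot_V N V" using img_qV[OF N Ginv[OF g] A] .
  have "induced_perm N V g (ginv V g ` A) = A" using img_ginv[OF g qV_sub[OF ps A]] B by (simp add: induced_perm_def)
  then have "inv_into (quot_V N V) (induced_perm N V g) A = ginv V g ` A" using inv_into_f_eq[OF inj B] by simp
  then show "induced_perm N V (ginv V g) A = ginv (quot_V N V) (induced_perm N V g) A"
    using A by (simp add: ginv_def induced_perm_def)
qed

lemma H_psub:
  assumes N: "nrm V G N"
  shows "psub (quot_V N V) (induced_group G N V)"
proof -
  have ps: "psub V N" using N by (simp add: nrm_def)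
  show ?thesis unfolding psub_def induced_group_def
  proof (intro conjI ballI)
    show "induced_perm N V ` G \<subseteq> Bij (quot_V N V)" using ind_Bij[OF N] by blast
    show "(\<lambda>x\<in>quot_V N V. x) \<in> induced_perm N V ` G" using ind_id[OF ps] Gid by (metis imageI)
  next
    fix a b assume "a \<in> induced_perm N V ` G" "b \<in> induced_perm N V ` G"
    then obtain g h where "g \<in> G" "h \<in> G" "a = induced_perm N V g" "b = induced_perm N V h" by blast
    then show "compose (quot_V N V) a b \<in> induced_perm N V ` G"
      using ind_comp[OF N] Gcomp by (metis imageI)
  next
    fix a assume "a \<in> induced_perm N V ` G"
    then obtain g where "g \<in> G" "a = induced_perm N V g" by blast
    then show "restrict (inv_into (quot_V N V) a) (quot_V N V) \<in> induced_perm N V ` G"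
      using ind_inv[OF N] Ginv unfolding ginv_def by (metis imageI)
  qed
qed

lemma qE_img:
  assumes N: "nrm V G N" and g: "g \<in> G" and AB: "quot_E N V E A B"
  shows "quot_E N V E (g ` A) (g ` B)"
proof -
  have ps: "psub V N" using N by (simp add: nrm_def)
  have A: "A \<in> quot_V N V" and B: "B \<in> quot_V N V" and ne: "A \<noteq> B"
    and ex: "\<exists>x\<in>A. \<exists>y\<in>B. E x y" using AB by (auto simp: quot_E_def)
  have "g ` A \<noteq> g ` B" using img_inj[OF GB[OF g] qV_sub[OF ps A] qV_sub[OF ps B]] ne by blast
  moreover have "\<exists>x\<in>g ` A. \<exists>y\<in>g ` B. E x y" using ex autE[OF g] by blast
  ultimately show ?thesis using img_qV[OF N g A] img_qV[OF N g B] by (simp add: quot_E_def)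
qed

lemma ind_aut:
  assumes N: "nrm V G N" and g: "g \<in> G"
  shows "is_automorphism (quot_V N V) (quot_E N V E) (induced_perm N V g)"
proof -
  have ps: "psub V N" using N by (simp add: nrm_def)
  have "quot_E N V E A B = quot_E N V E (g ` A) (g ` B)" if A: "A \<in> quot_V N V" and B: "B \<in> quot_V N V" for A B
  proof
    assume "quot_E N V E A B" then show "quot_E N V E (g ` A) (g ` B)" using qE_img[OF N g] by blast
  next
    assume "quot_E N V E (g ` A) (g ` B)"
    then have "quot_E N V E (ginv V g ` g ` A) (ginv V g ` g ` B)" using qE_img[OF N Ginv[OF g]] by blast
    moreover have "ginv V g ` g ` A = A" "ginv V g ` g ` B = B"
      using img_ginv2[OF g qV_sub[OF ps A]] img_ginv2[OF g qV_sub[OF ps B]] by auto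
    ultimately show "quot_E N V E A B" by simp
  qed
  then show ?thesis using ind_Bij[OF N g] by (simp add: is_automorphism_def induced_perm_def)
qed


lemma orb_of_mem: "psub V N \<Longrightarrow> A \<in> quot_V N V \<Longrightarrow> x \<in> A \<Longrightarrow> A = orbit N x"
proof -
  assume ps: "psub V N" and A: "A \<in> quot_V N V" and x: "x \<in> A"
  obtain v where v: "v \<in> V" "A = orbit N v" using A by (rule quot_VE)
  show ?thesis using orb_same[OF ps v(1)] x v(2) by simp
qed

lemma ex_edge: "\<exists>u w. E u w"
proof -
  obtain v where v: "v \<in> V" using Vne by blast
  have "nbs V E v \<noteq> {}" using nb_card[OF v] by auto
  then show ?thesis by (auto simp: nbs_def)
qed

lemma quot_hat:
  assumes N: "nrm V G N" and T: "tetravalent (quot_V N V) (quot_E N V E)"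
  shows "half_arc_transitive (induced_group G N V) (quot_V N V) (quot_E N V E)"
proof -
  have ps: "psub V N" and NG: "N \<subseteq> G" using N by (auto simp: nrm_def)
  let ?H = "induced_group G N V" and ?W = "quot_V N V" and ?F = "quot_E N V E"
  have c4: "\<And>v. v \<in> V \<Longrightarrow> card (qnb N V E v) = 4" using tet_qnb[OF T] .
  have sa: "subgroup_Aut ?H ?W ?F"
    unfolding subgroup_Aut_def
  proof
    show "subgroup ?H (BijGroup ?W)" using psub_subgroup[OF H_psub[OF N]] .
    show "\<forall>h\<in>?H. is_automorphism ?W ?F h" using ind_aut[OF N] by (auto simp: induced_group_def)
  qed
  have vtr: "vertex_transitive ?H ?W"
    unfolding vertex_transitive_def
  proof (intro ballI)
    fix A B assume A: "A \<in> ?W" and B: "B \<in> ?W"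
    obtain u where u: "u \<in> V" "A = orbit N u" using A by (rule quot_VE)
    obtain w where w: "w \<in> V" "B = orbit N w" using B by (rule quot_VE)
    obtain g where g: "g \<in> G" "g u = w" using vt[OF u(1) w(1)] by blast
    have "induced_perm N V g A = B" using ind_app[OF A] orb_img[OF psG N g(1) u(1)] u(2) w(2) g(2) by simp
    then show "\<exists>h\<in>?H. h A = B" using g(1) by (auto simp: induced_group_def)
  qed
  have etr: "edge_transitive ?H ?W ?F"
    unfolding edge_transitive_def
  proof (intro allI impI)
    fix A B C D assume AB: "?F A B" and CD: "?F C D"
    obtain x y where xy: "x \<in> A" "y \<in> B" "E x y" and A: "A \<in> ?W" and B: "B \<in> ?W"
      using AB by (auto simp: quot_E_def)
    obtain x' y' where xy': "x' \<in> C" "y' \<in> D" "E x' y'" and C: "C \<in> ?W" and D: "D \<in> ?W"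
      using CD by (auto simp: quot_E_def)
    have xV: "x \<in> V" and yV: "y \<in> V" using EV[OF xy(3)] by auto
    have eA: "A = orbit N x" using orb_of_mem[OF ps A xy(1)] .
    have eB: "B = orbit N y" using orb_of_mem[OF ps B xy(2)] .
    have eC: "C = orbit N x'" using orb_of_mem[OF ps C xy'(1)] .
    have eD: "D = orbit N y'" using orb_of_mem[OF ps D xy'(2)] .
    obtain g where g: "g \<in> G" "(g x = x' \<and> g y = y') \<or> (g x = y' \<and> g y = x')" using et[OF xy(3) xy'(3)] by blast
    have iA: "induced_perm N V g A = orbit N (g x)" using ind_app[OF A] orb_img[OF psG N g(1) xV] eA by simp
    have iB: "induced_perm N V g B = orbit N (g y)" using ind_app[OF B] orb_img[OF psG N g(1) yV] eB by simp
    have "{induced_perm N V g A, induced_perm N V g B} = {C, D}" using g(2) iA iB eC eD by auto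
    then show "\<exists>h\<in>?H. {h A, h B} = {C, D}" using g(1) by (auto simp: induced_group_def)
  qed
  have nat: "\<not> arc_transitive ?H ?W ?F"
  proof
    assume at: "arc_transitive ?H ?W ?F"
    obtain u w where e: "E u w" using ex_edge by blast
    have uV: "u \<in> V" and wV: "w \<in> V" using EV[OF e] by auto
    have wn: "w \<in> nbs V E u" using e wV by (simp add: nbs_def)
    have un: "u \<in> nbs V E w" using Esym[OF e] uV by (simp add: nbs_def)
    have ne: "orbit N w \<noteq> orbit N u" using cov(2)[OF ps NG uV c4[OF uV] wn] .
    have F1: "?F (orbit N u) (orbit N w)" and F2: "?F (orbit N w) (orbit N u)"
      using ne e Esym[OF e] orb_mem[OF ps uV] orb_mem[OF ps wV] quot_VI[OF uV] quot_VI[OF wV]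
      by (auto simp: quot_E_def)
    obtain h where h: "h \<in> ?H" "h (orbit N u) = orbit N w" "h (orbit N w) = orbit N u"
      using at[unfolded arc_transitive_def, rule_format, OF F1 F2] by blast
    obtain g where g: "g \<in> G" "h = induced_perm N V g" using h(1) by (auto simp: induced_group_def)
    have gu: "orbit N (g u) = orbit N w" using h(2) g(2) ind_app[OF quot_VI[OF uV]] orb_img[OF psG N g(1) uV] by simp
    have gw: "orbit N (g w) = orbit N u" using h(3) g(2) ind_app[OF quot_VI[OF wV]] orb_img[OF psG N g(1) wV] by simp
    have "g u \<in> orbit N w" using gu orb_mem[OF ps gmap[OF g(1) uV]] by simp
    then obtain n where n: "n \<in> N" "g u = n w" by (rule orbE)
    have nG: "n \<in> G" using n(1) NG by auto
    define k where "k = compose V (ginv V n) g"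
    have kG: "k \<in> G" using Gcomp[OF Ginv[OF nG] g(1)] by (simp add: k_def)
    have kapp: "k x = ginv V n (g x)" if "x \<in> V" for x using comp_app[OF Ginv[OF nG] that] by (simp add: k_def)
    have ku: "k u = w" using kapp[OF uV] n(2) ginvl[OF nG wV] by simp
    have "orbit N (k w) = orbit N (g w)" using kapp[OF wV] orb_n[OF ps gmap[OF g(1) wV] psubD(4)[OF ps n(1)]] by simp
    then have okw: "orbit N (k w) = orbit N u" using gw by simp
    have "E w (k w)" using autE[OF kG e] ku by simp
    then have "k w \<in> nbs V E w" using gmap[OF kG wV] by (simp add: nbs_def)
    then have kw: "k w = u" using inj_onD[OF cov(1)[OF ps NG wV c4[OF wV]] okw _ un] by simp
    show False using no_rev[OF kG e ku kw] .
  qed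
  show ?thesis using sa vtr etr nat by (simp add: half_arc_transitive_def)
qed


lemma H_sub: "nrm V G N \<Longrightarrow> subgroup (induced_group G N V) (BijGroup (quot_V N V))"
  using psub_subgroup[OF H_psub] .

definition pre :: "('a \<Rightarrow> 'a) set \<Rightarrow> ('a set \<Rightarrow> 'a set) set \<Rightarrow> ('a \<Rightarrow> 'a) set" where
  "pre N M = {g \<in> G. induced_perm N V g \<in> M}"

lemma pre_nrm:
  assumes N: "nrm V G N" and M: "nrm (quot_V N V) (induced_group G N V) M"
  shows "nrm V G (pre N M)"
proof -
  have ps: "psub V N" using N by (simp add: nrm_def)
  let ?W = "quot_V N V"
  have pM: "psub ?W M" and MH: "M \<subseteq> induced_group G N V"
    and cj: "\<And>h m. h \<in> induced_group G N V \<Longrightarrow> m \<in> M \<Longrightarrow> compose ?W (compose ?W h m) (ginv ?W h) \<in> M"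
    using M by (auto simp: nrm_def)
  have ps': "psub V (pre N M)" unfolding psub_def
  proof (intro conjI ballI)
    show "pre N M \<subseteq> Bij V" using GB by (auto simp: pre_def)
    show "(\<lambda>x\<in>V. x) \<in> pre N M" using Gid ind_id[OF ps] psubD(2)[OF pM] by (simp add: pre_def)
  next
    fix g h assume "g \<in> pre N M" "h \<in> pre N M"
    then have g: "g \<in> G" "induced_perm N V g \<in> M" and h: "h \<in> G" "induced_perm N V h \<in> M"
      by (auto simp: pre_def)
    show "compose V g h \<in> pre N M"
      using Gcomp[OF g(1) h(1)] ind_comp[OF N g(1) h(1)] psubD(3)[OF pM g(2) h(2)] by (simp add: pre_def)
  next
    fix g assume "g \<in> pre N M"
    then have g: "g \<in> G" "induced_perm N V g \<in> M" by (auto simp: pre_def)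
    show "restrict (inv_into V g) V \<in> pre N M"
      using Ginv[OF g(1)] ind_inv[OF N g(1)] psubD(4)[OF pM g(2)] by (simp add: pre_def ginv_def)
  qed
  have "compose V (compose V g m) (ginv V g) \<in> pre N M" if g: "g \<in> G" and m: "m \<in> pre N M" for g m
  proof -
    have mG: "m \<in> G" and mM: "induced_perm N V m \<in> M" using m by (auto simp: pre_def)
    have hg: "induced_perm N V g \<in> induced_group G N V" using g by (simp add: induced_group_def)
    have "induced_perm N V (compose V (compose V g m) (ginv V g))
        = compose ?W (compose ?W (induced_perm N V g) (induced_perm N V m)) (ginv ?W (induced_perm N V g))"
      using ind_comp[OF N Gcomp[OF g mG] Ginv[OF g]] ind_comp[OF N g mG] ind_inv[OF N g] by simp
    then show ?thesis using cj[OF hg mM] Gcomp[OF Gcomp[OF g mG] Ginv[OF g]] by (simp add: pre_def)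
  qed
  then show ?thesis using ps' by (auto simp: nrm_def pre_def)
qed

lemma N_pre:
  assumes N: "nrm V G N" and T: "tetravalent (quot_V N V) (quot_E N V E)"
    and M: "nrm (quot_V N V) (induced_group G N V) M"
  shows "N \<subseteq> pre N M"
proof
  fix n assume n: "n \<in> N"
  have "n \<in> action_kernel G N V" using kernel[OF N T] n by simp
  then have "n \<in> G" "induced_perm N V n = (\<lambda>A\<in>quot_V N V. A)" by (auto simp: action_kernel_def)
  moreover have "(\<lambda>A\<in>quot_V N V. A) \<in> M" using M by (simp add: nrm_def psubD(2))
  ultimately show "n \<in> pre N M" by (simp add: pre_def)
qed

lemma pre_big:
  assumes N: "nrm V G N" and T: "tetravalent (quot_V N V) (quot_E N V E)"
    and M: "nrm (quot_V N V) (induced_group G N V) M" and nt: "M \<noteq> {(\<lambda>A\<in>quot_V N V. A)}"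
  shows "card N < card (pre N M)"
proof -
  have idM: "(\<lambda>A\<in>quot_V N V. A) \<in> M" using M by (simp add: nrm_def psubD(2))
  obtain m where m: "m \<in> M" "m \<noteq> (\<lambda>A\<in>quot_V N V. A)" using nt idM by blast
  have "m \<in> induced_group G N V" using m(1) M by (auto simp: nrm_def)
  then obtain g where g: "g \<in> G" "m = induced_perm N V g" by (auto simp: induced_group_def)
  have gp: "g \<in> pre N M" using g m(1) by (simp add: pre_def)
  have "g \<notin> N"
  proof
    assume "g \<in> N"
    then have "g \<in> action_kernel G N V" using kernel[OF N T] by simp
    then show False using g m(2) by (simp add: action_kernel_def)
  qed
  then have "N \<subset> pre N M" using N_pre[OF N T M] gp by blast
  moreover have "finite (pre N M)" using Gfin by (simp add: pre_def)
  ultimately show ?thesis by (rule psubset_card_mono[rotated])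
qed

lemma union_orb:
  assumes N: "nrm V G N" and M: "nrm (quot_V N V) (induced_group G N V) M"
    and NM: "N \<subseteq> pre N M" and v: "v \<in> V"
  shows "\<Union> (orbit M (orbit N v)) = orbit (pre N M) v"
proof
  have ps: "psub V N" using N by (simp add: nrm_def)
  have pp: "psub V (pre N M)" using pre_nrm[OF N M] by (simp add: nrm_def)
  show "\<Union> (orbit M (orbit N v)) \<subseteq> orbit (pre N M) v"
  proof
    fix z assume "z \<in> \<Union> (orbit M (orbit N v))"
    then obtain m where m: "m \<in> M" "z \<in> m (orbit N v)" by (auto simp: orbit_def)
    have "m \<in> induced_group G N V" using m(1) M by (auto simp: nrm_def)
    then obtain g where g: "g \<in> G" "m = induced_perm N V g" by (auto simp: induced_group_def)
    have gp: "g \<in> pre N M" using g m(1) by (simp add: pre_def)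
    have "m (orbit N v) = orbit N (g v)"
      using g(2) ind_app[OF quot_VI[OF v]] orb_img[OF psG N g(1) v] by simp
    then obtain n where n: "n \<in> N" "z = n (g v)" using m(2) by (auto elim: orbE)
    have "compose V n g v = z" using n(2) v by (simp add: compose_def)
    moreover have "compose V n g \<in> pre N M" using psubD(3)[OF pp subsetD[OF NM n(1)] gp] .
    ultimately show "z \<in> orbit (pre N M) v" using orbI[of "compose V n g" "pre N M" v] by simp
  qed
  show "orbit (pre N M) v \<subseteq> \<Union> (orbit M (orbit N v))"
  proof
    fix z assume "z \<in> orbit (pre N M) v"
    then obtain g where g: "g \<in> pre N M" "z = g v" by (rule orbE)
    have gG: "g \<in> G" and gM: "induced_perm N V g \<in> M" using g(1) by (auto simp: pre_def)
    have e: "induced_perm N V g (orbit N v) = orbit N (g v)"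
      using ind_app[OF quot_VI[OF v]] orb_img[OF psG N gG v] by simp
    have "orbit N (g v) \<in> orbit M (orbit N v)" using orbI[OF gM, of "orbit N v"] e by simp
    moreover have "z \<in> orbit N (g v)" using g(2) orb_mem[OF ps gmap[OF gG v]] by simp
    ultimately show "z \<in> \<Union> (orbit M (orbit N v))" by blast
  qed
qed


lemma val_transfer:
  assumes N: "nrm V G N" and T: "tetravalent (quot_V N V) (quot_E N V E)"
    and M: "nrm (quot_V N V) (induced_group G N V) M"
    and VL: "valency_le 2 (quot_V (pre N M) V) (quot_E (pre N M) V E)"
  shows "valency_le 2 (quot_V M (quot_V N V)) (quot_E M (quot_V N V) (quot_E N V E))"
proof -
  let ?W = "quot_V N V" and ?F = "quot_E N V E" and ?M' = "pre N M"
  let ?QW = "quot_V M ?W" and ?QF = "quot_E M ?W ?F"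
  have ps: "psub V N" using N by (simp add: nrm_def)
  have pM: "psub ?W M" using M by (simp add: nrm_def)
  have NM: "N \<subseteq> ?M'" using N_pre[OF N T M] .
  have pp: "psub V ?M'" using pre_nrm[OF N M] by (simp add: nrm_def)
  have psi: "\<exists>w\<in>V. B = orbit M (orbit N w) \<and> \<Union>B = orbit ?M' w" if B: "B \<in> ?QW" for B
  proof -
    obtain A where A: "A \<in> ?W" "B = orbit M A" using B by (rule quot_VE)
    obtain w where w: "w \<in> V" "A = orbit N w" using A(1) by (rule quot_VE)
    show ?thesis using union_orb[OF N M NM w(1)] A(2) w by blast
  qed
  have inj: "inj_on Union ?QW"
  proof (rule inj_onI)
    fix B1 B2 assume B1: "B1 \<in> ?QW" and B2: "B2 \<in> ?QW" and eq: "\<Union>B1 = \<Union>B2"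
    obtain w1 where w1: "w1 \<in> V" "B1 = orbit M (orbit N w1)" "\<Union>B1 = orbit ?M' w1" using psi[OF B1] by blast
    obtain w2 where w2: "w2 \<in> V" "B2 = orbit M (orbit N w2)" "\<Union>B2 = orbit ?M' w2" using psi[OF B2] by blast
    have "w2 \<in> orbit ?M' w1" using orb_eq_iff[OF pp w1(1) w2(1)] eq w1(3) w2(3) by simp
    then obtain g where g: "g \<in> ?M'" "w2 = g w1" by (rule orbE)
    have gG: "g \<in> G" and gM: "induced_perm N V g \<in> M" using g(1) by (auto simp: pre_def)
    have "induced_perm N V g (orbit N w1) = orbit N w2"
      using ind_app[OF quot_VI[OF w1(1)]] orb_img[OF psG N gG w1(1)] g(2) by simp
    then have "orbit N w2 \<in> orbit M (orbit N w1)" using orbI[OF gM, of "orbit N w1"] by simp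
    then have "orbit M (orbit N w2) = orbit M (orbit N w1)" using orb_same[OF pM quot_VI[OF w1(1)]] by simp
    then show "B1 = B2" using w1(2) w2(2) by simp
  qed
  show ?thesis unfolding valency_le_def
  proof
    fix A assume A: "A \<in> ?QW"
    obtain v where v: "v \<in> V" "A = orbit M (orbit N v)" "\<Union>A = orbit ?M' v" using psi[OF A] by blast
    let ?nA = "{u \<in> ?QW. ?QF A u}"
    let ?nA' = "{u \<in> quot_V ?M' V. quot_E ?M' V E (orbit ?M' v) u}"
    have vl: "finite ?nA'" "card ?nA' \<le> 2" using VL quot_VI[OF v(1)] by (auto simp: valency_le_def)
    have sub: "Union ` ?nA \<subseteq> ?nA'"
    proof
      fix C assume "C \<in> Union ` ?nA"
      then obtain B where B: "B \<in> ?QW" "?QF A B" "C = \<Union>B" by blast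
      obtain w where w: "w \<in> V" "\<Union>B = orbit ?M' w" using psi[OF B(1)] by blast
      have ne: "A \<noteq> B" and ex: "\<exists>A1\<in>A. \<exists>B1\<in>B. ?F A1 B1" using B(2) by (auto simp: quot_E_def)
      obtain A1 B1 where AB1: "A1 \<in> A" "B1 \<in> B" "?F A1 B1" using ex by blast
      obtain x y where xy: "x \<in> A1" "y \<in> B1" "E x y" using AB1(3) by (auto simp: quot_E_def)
      have "\<Union>A \<noteq> \<Union>B" using inj_onD[OF inj _ A B(1)] ne by blast
      moreover have "x \<in> \<Union>A" "y \<in> \<Union>B" using xy AB1 by auto
      ultimately have "quot_E ?M' V E (orbit ?M' v) C"
        using v(3) w(2) B(3) quot_VI[OF v(1)] quot_VI[OF w(1)] xy(3) by (auto simp: quot_E_def)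
      then show "C \<in> ?nA'" using B(3) w(2) quot_VI[OF w(1)] by simp
    qed
    have "?nA \<subseteq> ?QW" by (rule Collect_restrict)
    then have injA: "inj_on Union ?nA" by (rule inj_on_subset[OF inj])
    have finA: "finite ?nA" using finite_imageD[OF finite_subset[OF sub vl(1)] injA] .
    have "card ?nA = card (Union ` ?nA)" using card_image[OF injA] by simp
    also have "\<dots> \<le> card ?nA'" using card_mono[OF vl(1) sub] .
    finally show "finite ?nA \<and> card ?nA \<le> 2" using finA vl(2) by simp
  qed
qed


lemma qnb_tet: "(\<And>v. v \<in> V \<Longrightarrow> card (qnb N V E v) = 4) \<Longrightarrow> tetravalent (quot_V N V) (quot_E N V E)"
proof -
  assume c: "\<And>v. v \<in> V \<Longrightarrow> card (qnb N V E v) = 4"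
  show ?thesis unfolding tetravalent_def
  proof
    fix A assume "A \<in> quot_V N V"
    then obtain v where v: "v \<in> V" "A = orbit N v" by (rule quot_VE)
    show "card {u \<in> quot_V N V. quot_E N V E A u} = 4" using c[OF v(1)] v(2) by (simp add: qnb_def nbs_def)
  qed
qed

lemma triv_nrm: "nrm V G {(\<lambda>x\<in>V. x)}"
proof -
  have grp: "group (perm_grp V G)" using Gsub by (simp add: subgroup.subgroup_is_group group_BijGroup)
  have "normal {\<one>\<^bsub>perm_grp V G\<^esub>} (perm_grp V G)" using group.one_is_normal[OF grp] .
  then have "normal {(\<lambda>x\<in>V. x)} (perm_grp V G)" by (simp add: BijGroup_def)
  then show ?thesis using normal_nrm[OF Gsub] by blast
qed

lemma triv_tet: "tetravalent (quot_V {(\<lambda>x\<in>V. x)} V) (quot_E {(\<lambda>x\<in>V. x)} V E)"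
proof (rule qnb_tet)
  fix v assume v: "v \<in> V"
  let ?I = "{(\<lambda>x\<in>V. x)}"
  have ps: "psub V ?I" using triv_nrm by (simp add: nrm_def)
  have IG: "?I \<subseteq> G" using Gid by simp
  have o: "orbit ?I x = {x}" if "x \<in> V" for x using that by (simp add: orbit_def)
  have "orbit ?I ` nbs V E v = (\<lambda>x. {x}) ` nbs V E v"
    by (rule image_cong[OF refl]) (simp add: o nbs_def)
  moreover have "{v} \<notin> (\<lambda>x. {x}) ` nbs V E v" using Eirr by (auto simp: nbs_def)
  ultimately have "qnb ?I V E v = (\<lambda>x. {x}) ` nbs V E v" using qnb_eq[OF ps IG v] o[OF v] by simp
  moreover have "card ((\<lambda>x. {x}) ` nbs V E v) = card (nbs V E v)" by (rule card_image) (simp add: inj_on_def)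
  ultimately show "card (qnb ?I V E v) = 4" using nb_card[OF v] by simp
qed

end

theorem lemma5p1:
  fixes V :: "'a set" and E :: "'a \<Rightarrow> 'a \<Rightarrow> bool" and G :: "('a \<Rightarrow> 'a) set"
  assumes "finite V"
    and "simple_graph V E"
    and "connected_graph V E"
    and "tetravalent V E"
    and "half_arc_transitive G V E"
  shows "\<exists>N. normal N (perm_grp V G) \<and> action_kernel G N V = N \<and>
    tetravalent (quot_V N V) (quot_E N V E) \<and>
    basic (induced_group G N V) (quot_V N V) (quot_E N V E)"
proof -
  interpret hatg V E G by (rule hatg.intro[OF assms])
  obtain v0 a0 where e0: "E v0 a0" using ex_edge by blast
  interpret D: hatD V E G v0 a0 by (rule hatD.intro, unfold_locales, rule e0)
  define S where "S = {N. nrm V G N \<and> tetravalent (quot_V N V) (quot_E N V E)}"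
  have triv: "{(\<lambda>x\<in>V. x)} \<in> S" using triv_nrm triv_tet by (simp add: S_def)
  have finS: "finite S"
  proof (rule finite_subset)
    show "S \<subseteq> Pow G" by (auto simp: S_def nrm_def)
    show "finite (Pow G)" using Gfin by simp
  qed
  define m where "m = Max (card ` S)"
  have "m \<in> card ` S" unfolding m_def using finS triv by (intro Max_in) auto
  then obtain N where NS: "N \<in> S" and Nm: "card N = m" by blast
  have mx: "card N' \<le> card N" if "N' \<in> S" for N'
    using Nm finS that unfolding m_def by (simp add: Max_ge)
  have N: "nrm V G N" and T: "tetravalent (quot_V N V) (quot_E N V E)" using NS by (auto simp: S_def)
  let ?H = "induced_group G N V" and ?W = "quot_V N V" and ?F = "quot_E N V E"
  have Hsub: "subgroup ?H (BijGroup ?W)" using H_sub[OF N] .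
  have bas: "basic ?H ?W ?F"
    unfolding basic_def
  proof (intro conjI allI impI)
    show "connected_graph ?W ?F" using quot_conn N by (simp add: nrm_def)
    show "tetravalent ?W ?F" using T .
    show "half_arc_transitive ?H ?W ?F" using quot_hat[OF N T] .
  next
    fix M assume Mn: "normal M (perm_grp ?W ?H)" and nt: "M \<noteq> {(\<lambda>x\<in>?W. x)}"
    have M: "nrm ?W ?H M" using normal_nrm[OF Hsub Mn] .
    have P: "nrm V G (pre N M)" using pre_nrm[OF N M] .
    have big: "card N < card (pre N M)" using pre_big[OF N T M nt] .
    have "\<not> tetravalent (quot_V (pre N M) V) (quot_E (pre N M) V E)"
    proof
      assume "tetravalent (quot_V (pre N M) V) (quot_E (pre N M) V E)"
      then have "pre N M \<in> S" using P by (simp add: S_def)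
      then show False using mx big by fastforce
    qed
    then have "valency_le 2 (quot_V (pre N M) V) (quot_E (pre N M) V E)" using D.dich[OF P] by blast
    then show "valency_le 2 (quot_V M ?W) (quot_E M ?W ?F)" using val_transfer[OF N T M] by blast
  qed
  show ?thesis
    using nrm_normal[OF Gsub N] kernel[OF N T] T bas by blast
qed

end
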